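(* Let $d\ge 1$ and let $(h_0,\dots,h_s)$ be a sequence of non-negative integers. The following are equivalent: (a) there is a $d$-uniform Ferrers hypergraph $F$ such that $\alpha_i(F)=h_i$ for $0\le i\le s$ and $\alpha_i(F)=0$ for $i>s$; (b) $(h_0,\dots,h_s)$ is an $O$-sequence with $h_1\le d$.
   Context: A $d$-uniform Ferrers hypergraph on $X^{(1)}\sqcup\dots\sqcup X^{(d)}$ (each $X^{(j)}=\{1,\dots,n_j\}$ linearly ordered) is a set $F\subseteq X^{(1)}\times\dots\times X^{(d)}$ such that $(i_1,\dots,i_d)\in F$ and $i'_j\le i_j$ for all $j$ imply $(i'_1,\dots,i'_d)\in F$. For $k\ge 0$, $\alpha_k(F):=\#\{(i_1,\dots,i_d)\in F:\sum_j i_j=k+d\}$. Macaulay representation: for positive integers $b,j$ there are unique integers $m_j>m_{j-1}>\dots>m_r\ge r\ge 1$ with $b=\binom{m_j}{j}+\binom{m_{j-1}}{j-1}+\dots+\binom{m_r}{r}$; set $b^{\langle j\rangle}=\binom{m_j+1}{j+1}+\dots+\binom{m_r+1}{r+1}$, and $0^{\langle j\rangle}=0$. A sequence $(h_0,h_1,\dots)$ of non-negative integers is an $O$-sequence if $h_0=1$ and $h_{i+1}\le h_i^{\langle i\rangle}$ for all $i\ge 1$. *)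

theory Defs
  imports Main
begin

text \<open>Points of X^(1) x ... x X^(d) are lists x of length d with 1 \<le> x!j \<le> n j
  (coordinates indexed 0..d-1).\<close>

definition ferrers_hypergraph :: "nat \<Rightarrow> (nat \<Rightarrow> nat) \<Rightarrow> nat list set \<Rightarrow> bool" where
  "ferrers_hypergraph d n F \<longleftrightarrow>
     F \<subseteq> {x. length x = d \<and> (\<forall>j<d. 1 \<le> x ! j \<and> x ! j \<le> n j)} \<and>
     (\<forall>x\<in>F. \<forall>y. length y = d \<and> (\<forall>j<d. 1 \<le> y ! j \<and> y ! j \<le> x ! j) \<longrightarrow> y \<in> F)"

definition alpha :: "nat \<Rightarrow> nat \<Rightarrow> nat list set \<Rightarrow> nat" where
  "alpha d k F = card {x\<in>F. sum_list x = k + d}"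

definition macaulay_rep :: "nat \<Rightarrow> nat \<Rightarrow> (nat \<Rightarrow> nat) \<Rightarrow> nat \<Rightarrow> bool" where
  "macaulay_rep b j m r \<longleftrightarrow>
     1 \<le> r \<and> r \<le> j \<and> r \<le> m r \<and> (\<forall>t. r \<le> t \<and> t < j \<longrightarrow> m t < m (Suc t)) \<and>
     b = (\<Sum>t=r..j. m t choose t)"

definition macaulay_upper :: "nat \<Rightarrow> nat \<Rightarrow> nat" where
  "macaulay_upper b j =
     (if b = 0 then 0
      else (THE v. \<exists>m r. macaulay_rep b j m r \<and> v = (\<Sum>t=r..j. (m t + 1) choose (t + 1))))"

definition O_sequence :: "(nat \<Rightarrow> nat) \<Rightarrow> bool" where
  "O_sequence h \<longleftrightarrow> h 0 = 1 \<and> (\<forall>i\<ge>1. h (Suc i) \<le> macaulay_upper (h i) i)"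

definition trunc_seq :: "(nat \<Rightarrow> nat) \<Rightarrow> nat \<Rightarrow> nat \<Rightarrow> nat" where
  "trunc_seq h s i = (if i \<le> s then h i else 0)"

end

theory Submission
  imports Defs "HOL-Library.Multiset"
begin

definition mtop :: "nat \<Rightarrow> nat \<Rightarrow> nat" where
  "mtop k b = (LEAST m. b < Suc m choose k)"

lemma choose_big: "1 \<le> k \<Longrightarrow> Suc b \<le> (b + k) choose k"
proof (induction k rule: nat_induct_at_least)
  case base then show ?case by simp
next
  case (Suc k)
  have "(b + Suc k) choose Suc k = (b+k choose k) + (b+k choose Suc k)" by simp
  then show ?case using Suc by linarith
qed

lemma mtop_ex: "1 \<le> k \<Longrightarrow> \<exists>m. b < Suc m choose k"
proof -
  assume k: "1 \<le> k"
  have "Suc (b + k - 1) = b + k" using k by simp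
  then have "b < Suc (b + k - 1) choose k" using choose_big[OF k, of b] by simp
  then show ?thesis by blast
qed

lemma mtop_upper: "1 \<le> k \<Longrightarrow> b < Suc (mtop k b) choose k"
  unfolding mtop_def by (rule LeastI_ex[OF mtop_ex])

lemma mtop_lower: "1 \<le> k \<Longrightarrow> mtop k b choose k \<le> b"
proof (cases "mtop k b")
  case 0
  assume "1 \<le> k" with 0 show ?thesis by (cases k) auto
next
  case (Suc m)
  have "m < mtop k b" using Suc by simp
  hence "\<not> b < Suc m choose k" unfolding mtop_def by (rule not_less_Least)
  thus ?thesis using Suc by simp
qed

lemma mtop_unique:
  assumes "1 \<le> k" "n choose k \<le> b" "b < Suc n choose k"
  shows "mtop k b = n"
  unfolding mtop_def
proof (rule Least_equality)
  show "b < Suc n choose k" by fact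
next
  fix y assume y: "b < Suc y choose k"
  show "n \<le> y"
  proof (rule ccontr)
    assume "\<not> n \<le> y"
    then have "Suc y \<le> n" by simp
    then have "Suc y choose k \<le> n choose k" by (rule binomial_right_mono)
    with y assms(2) show False by simp
  qed
qed

fun mf :: "nat \<Rightarrow> nat \<Rightarrow> nat" where
  "mf 0 b = b"
| "mf (Suc k) b = (Suc (mtop (Suc k) b) choose Suc (Suc k)) + mf k (b - (mtop (Suc k) b choose Suc k))"

declare mf.simps(2)[simp del]

lemma mf_decomp:
  "n choose Suc k \<le> b \<Longrightarrow> b < Suc n choose Suc k \<Longrightarrow>
   mf (Suc k) b = (Suc n choose Suc (Suc k)) + mf k (b - (n choose Suc k))"
  using mtop_unique[of "Suc k" n b] by (simp add: mf.simps(2))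

lemma decomp_le: "b < Suc n choose Suc k \<Longrightarrow> k \<le> n"
  by (metis Suc_le_mono binomial_eq_0 less_nat_zero_code linorder_not_le)

lemma decomp_rem: "n choose Suc k \<le> b \<Longrightarrow> b < Suc n choose Suc k \<Longrightarrow> b - (n choose Suc k) < n choose k"
  by simp

section \<open>Colex segments\<close>

fun col :: "nat \<Rightarrow> nat \<Rightarrow> nat \<Rightarrow> nat multiset set" where
  "col p 0 b = (if b = 0 then {} else {{#}})"
| "col p (Suc k) b = multisets_of_size {p..<p + mtop (Suc k) b - k} (Suc k) \<union>
      add_mset (p + mtop (Suc k) b - k) ` col p k (b - (mtop (Suc k) b choose Suc k))"

declare col.simps(2)[simp del]

lemma col_decomp:
  "n choose Suc k \<le> b \<Longrightarrow> b < Suc n choose Suc k \<Longrightarrow>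
   col p (Suc k) b = multisets_of_size {p..<p+n-k} (Suc k) \<union> add_mset (p+n-k) ` col p k (b - (n choose Suc k))"
  using mtop_unique[of "Suc k" n b] by (simp add: col.simps(2))

lemma col_zero[simp]: "col p k 0 = {}"
proof (induction k)
  case 0 then show ?case by simp
next
  case (Suc k)
  have "mtop (Suc k) 0 = k" by (rule mtop_unique) auto
  then show ?case using Suc by (simp add: col.simps(2))
qed

lemma col_size: "M \<in> col p k b \<Longrightarrow> size M = k"
  by (induction k arbitrary: b M) (auto simp: multisets_of_size_def col.simps(2) split: if_splits)

lemma col_range: "b \<le> n choose k \<Longrightarrow> col p k b \<subseteq> multisets_of_size {p..<p + Suc n - k} k"
proof (induction k arbitrary: b n)
  case 0 then show ?case by (auto simp: multisets_of_size_def)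
next
  case (Suc k)
  show ?case
  proof (cases "b = 0")
    case True then show ?thesis by simp
  next
    case False
    define m where "m = mtop (Suc k) b"
    have lo: "m choose Suc k \<le> b" and hi: "b < Suc m choose Suc k"
      using mtop_lower[of "Suc k" b] mtop_upper[of "Suc k" b] by (auto simp: m_def)
    have km: "Suc k \<le> m"
    proof (rule ccontr)
      assume "\<not> Suc k \<le> m"
      then have "Suc m \<le> Suc k" by simp
      then have "Suc m choose Suc k \<le> 1"
        by (metis One_nat_def binomial_n_n binomial_right_mono)
      with hi False show False by simp
    qed
    have kn: "Suc k \<le> n"
      using Suc.prems False by (metis binomial_eq_0 gr0I leI le_zero_eq)
    have mn: "m \<le> n"
    proof (rule ccontr)
      assume "\<not> m \<le> n"
      then have "Suc n \<le> m" by simp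
      then have "Suc n choose Suc k \<le> m choose Suc k" by (rule binomial_right_mono)
      moreover have "(n choose k) > 0" using kn by simp
      ultimately show False using lo Suc.prems by simp
    qed
    have col: "col p (Suc k) b = multisets_of_size {p..<p+m-k} (Suc k) \<union>
        add_mset (p+m-k) ` col p k (b - (m choose Suc k))"
      by (simp add: m_def col.simps(2))
    show ?thesis
    proof
      fix M assume "M \<in> col p (Suc k) b"
      then consider "M \<in> multisets_of_size {p..<p+m-k} (Suc k)"
        | M' where "M = add_mset (p+m-k) M'" "M' \<in> col p k (b - (m choose Suc k))"
        using col by auto
      then show "M \<in> multisets_of_size {p..<p + Suc n - Suc k} (Suc k)"
      proof cases
        case 1
        have "{p..<p+m-k} \<subseteq> {p..<p + Suc n - Suc k}" using mn km by auto
        with 1 show ?thesis using multisets_of_size_mono by blast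
      next
        case 2
        show ?thesis
        proof (cases "m = n")
          case True
          then have "b - (m choose Suc k) = 0" using Suc.prems by simp
          with 2 show ?thesis by simp
        next
          case False
          have "b - (m choose Suc k) \<le> m choose k" using hi lo by simp
          from Suc.IH[OF this] 2 have "M' \<in> multisets_of_size {p..<p + Suc m - k} k" by blast
          then show ?thesis using 2 False mn km
            by (auto simp: multisets_of_size_def subset_iff)
        qed
      qed
    qed
  qed
qed

lemma col_card: "finite (col p k b) \<and> (1 \<le> k \<or> b \<le> 1 \<longrightarrow> card (col p k b) = b)"
proof (induction k arbitrary: b)
  case 0 then show ?case by auto
next
  case (Suc k)
  define m where "m = mtop (Suc k) b"
  define b1 where "b1 = b - (m choose Suc k)"
  have lo: "m choose Suc k \<le> b" and hi: "b < Suc m choose Suc k"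
    using mtop_lower[of "Suc k" b] mtop_upper[of "Suc k" b] by (auto simp: m_def)
  have km: "k \<le> m" using decomp_le[OF hi] .
  have b1: "b1 < m choose k" using decomp_rem[OF lo hi] by (simp add: b1_def)
  have col: "col p (Suc k) b = multisets_of_size {p..<p+m-k} (Suc k) \<union>
        add_mset (p+m-k) ` col p k b1"
    by (simp add: m_def b1_def col.simps(2))
  have IH: "finite (col p k b1)" "card (col p k b1) = b1"
    using Suc.IH[of b1] b1 by (auto simp: Suc_le_eq)
  have c1: "card (multisets_of_size {p..<p+m-k} (Suc k)) = m choose Suc k"
    using km by (simp add: card_multisets_of_size)
  have c2: "card (add_mset (p+m-k) ` col p k b1) = b1"
    using IH by (simp add: card_image inj_on_def)
  have disj: "multisets_of_size {p..<p+m-k} (Suc k) \<inter> add_mset (p+m-k) ` col p k b1 = {}"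
    by (auto simp: multisets_of_size_def)
  have fin: "finite (multisets_of_size {p..<p+m-k} (Suc k))" by auto
  have "card (col p (Suc k) b) = (m choose Suc k) + b1"
    unfolding col by (subst card_Un_disjoint) (use fin IH disj c1 c2 in auto)
  moreover have "(m choose Suc k) + b1 = b" using lo by (simp add: b1_def)
  ultimately show ?case using fin IH col by auto
qed

lemma col_finite[simp]: "finite (col p k b)"
  using col_card by blast

lemma col_card': "1 \<le> k \<Longrightarrow> card (col p k b) = b"
  using col_card by blast

lemma mtop_mono:
  assumes "1 \<le> k" "b \<le> c" shows "mtop k b \<le> mtop k c"
proof (rule ccontr)
  assume "\<not> mtop k b \<le> mtop k c"
  then have "Suc (mtop k c) \<le> mtop k b" by simp
  then have "Suc (mtop k c) choose k \<le> mtop k b choose k" by (rule binomial_right_mono)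
  with mtop_lower[OF assms(1), of b] mtop_upper[OF assms(1), of c] assms(2) show False by simp
qed

lemma col_mono: "b \<le> c \<Longrightarrow> col p k b \<subseteq> col p k c"
proof (induction k arbitrary: b c)
  case 0 then show ?case by auto
next
  case (Suc k)
  define mb where "mb = mtop (Suc k) b"
  define mc where "mc = mtop (Suc k) c"
  have hib: "b < Suc mb choose Suc k" using mtop_upper[of "Suc k" b] by (simp add: mb_def)
  have lob: "mb choose Suc k \<le> b" using mtop_lower[of "Suc k" b] by (simp add: mb_def)
  have loc: "mc choose Suc k \<le> c" using mtop_lower[of "Suc k" c] by (simp add: mc_def)
  have "mb \<le> mc" using mtop_mono[of "Suc k" b c] Suc.prems by (simp add: mb_def mc_def)
  then consider "mb = mc" | "mb < mc" by linarith
  then show ?case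
  proof cases
    case 1
    have "b - (mb choose Suc k) \<le> c - (mc choose Suc k)" using 1 Suc.prems by simp
    from Suc.IH[OF this] show ?thesis using 1 by (auto simp: mb_def mc_def col.simps(2))
  next
    case 2
    have km: "k \<le> mb" using decomp_le[OF hib] .
    have "col p (Suc k) b \<subseteq> multisets_of_size {p..<p + Suc (Suc mb) - Suc k} (Suc k)"
      by (rule col_range) (use hib in simp)
    also have "\<dots> \<subseteq> multisets_of_size {p..<p + mc - k} (Suc k)"
      by (rule multisets_of_size_mono) (use 2 km in auto)
    also have "\<dots> \<subseteq> col p (Suc k) c" by (simp add: mc_def col.simps(2))
    finally show ?thesis .
  qed
qed

lemma col_ge: "M \<in> col p k b \<Longrightarrow> x \<in># M \<Longrightarrow> p \<le> x"
proof -
  assume M: "M \<in> col p k b" and x: "x \<in># M"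
  have "b \<le> (b + k) choose k \<or> k = 0"
    using choose_big[of k b] by auto
  then show ?thesis
  proof
    assume "b \<le> (b + k) choose k"
    from col_range[OF this, of p] M have "M \<in> multisets_of_size {p..<p + Suc (b + k) - k} k"
      by blast
    then show ?thesis using x by (auto simp: multisets_of_size_def)
  next
    assume "k = 0" with M x show ?thesis by (auto split: if_splits)
  qed
qed

lemma col_le_top:
  assumes "M \<in> col p (Suc k) b" "x \<in># M"
  shows "x \<le> p + mtop (Suc k) b - k"
proof -
  have hi: "b < Suc (mtop (Suc k) b) choose Suc k" using mtop_upper[of "Suc k" b] by simp
  have "col p (Suc k) b \<subseteq> multisets_of_size {p..<p + Suc (Suc (mtop (Suc k) b)) - Suc k} (Suc k)"
    by (rule col_range) (use hi in simp)
  with assms(1) have "M \<in> multisets_of_size {p..<p + Suc (Suc (mtop (Suc k) b)) - Suc k} (Suc k)"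
    by blast
  with assms(2) decomp_le[OF hi] show ?thesis by (auto simp: multisets_of_size_def subset_iff)
qed

lemma col_borel:
  "M \<in> col p k b \<Longrightarrow> x \<in># M \<Longrightarrow> p \<le> y \<Longrightarrow> y < x \<Longrightarrow> add_mset y (M - {#x#}) \<in> col p k b"
proof (induction k arbitrary: b M x y)
  case 0 then show ?case by (auto split: if_splits)
next
  case (Suc k)
  define m where "m = mtop (Suc k) b"
  define b1 where "b1 = b - (m choose Suc k)"
  define v where "v = p + m - k"
  have hi: "b < Suc m choose Suc k" using mtop_upper[of "Suc k" b] by (simp add: m_def)
  have lo: "m choose Suc k \<le> b" using mtop_lower[of "Suc k" b] by (simp add: m_def)
  have km: "k \<le> m" using decomp_le[OF hi] .
  have col: "col p (Suc k) b = multisets_of_size {p..<v} (Suc k) \<union> add_mset v ` col p k b1"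
    by (simp add: m_def b1_def v_def col.simps(2))
  have b1: "b1 \<le> m choose k" using decomp_rem[OF lo hi] by (simp add: b1_def)
  have rng: "col p k b1 \<subseteq> multisets_of_size {p..<Suc v} k"
    using col_range[OF b1, of p] km by (simp add: v_def Suc_diff_le)
  from Suc.prems(1) consider "M \<in> multisets_of_size {p..<v} (Suc k)"
    | M' where "M = add_mset v M'" "M' \<in> col p k b1" using col by auto
  then show ?case
  proof cases
    case 1
    then have "add_mset y (M - {#x#}) \<in> multisets_of_size {p..<v} (Suc k)"
      using Suc.prems by (auto simp: multisets_of_size_def size_Diff_singleton
          dest: in_diffD)
    then show ?thesis using col by auto
  next
    case 2
    show ?thesis
    proof (cases "x = v")
      case True
      then have eq: "add_mset y (M - {#x#}) = add_mset y M'" using 2 by simp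
      show ?thesis
      proof (cases "v \<in># M'")
        case True
        have "add_mset y (M' - {#v#}) \<in> col p k b1"
          using Suc.IH[OF 2(2) True Suc.prems(3)] Suc.prems(4) \<open>x = v\<close> by simp
        moreover have "add_mset y M' = add_mset v (add_mset y (M' - {#v#}))"
          using True by (metis add_mset_commute insert_DiffM)
        ultimately have "add_mset y (M - {#x#}) \<in> add_mset v ` col p k b1"
          using eq by (metis imageI)
        then show ?thesis using col by (metis UnI2)
      next
        case False
        have "set_mset M' \<subseteq> {p..<Suc v}" "size M' = k"
          using rng 2(2) by (auto simp: multisets_of_size_def)
        then have "set_mset M' \<subseteq> {p..<v}" using False
          by (auto simp: subset_iff less_Suc_eq)
        then have "add_mset y M' \<in> multisets_of_size {p..<v} (Suc k)"
          using Suc.prems \<open>size M' = k\<close> True by (auto simp: multisets_of_size_def)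
        then show ?thesis using eq col by (metis UnI1)
      qed
    next
      case False
      then have xM': "x \<in># M'" using 2 Suc.prems(2) by auto
      have "add_mset y (M - {#x#}) = add_mset v (add_mset y (M' - {#x#}))"
        using 2 False by (simp add: add_mset_commute)
      moreover have "add_mset y (M' - {#x#}) \<in> col p k b1"
        using Suc.IH[OF 2(2) xM' Suc.prems(3,4)] .
      ultimately have "add_mset y (M - {#x#}) \<in> add_mset v ` col p k b1"
        by (metis imageI)
      then show ?thesis using col by (metis UnI2)
    qed
  qed
qed

lemma col_full: "col p k (n choose k) = multisets_of_size {p..<p + Suc n - k} k"
proof (cases k)
  case 0 then show ?thesis by simp
next
  case (Suc k')
  have sub: "col p k (n choose k) \<subseteq> multisets_of_size {p..<p + Suc n - k} k"
    by (rule col_range) simp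
  have fin: "finite (multisets_of_size {p..<p + Suc n - k} k)" by auto
  have "card (multisets_of_size {p..<p + Suc n - k} k) = n choose k"
  proof (cases "k \<le> Suc n")
    case True
    then show ?thesis by (simp add: card_multisets_of_size)
  next
    case False
    then have "{p..<p + Suc n - k} = {}" by auto
    then show ?thesis using False Suc by simp
  qed
  moreover have "card (col p k (n choose k)) = n choose k" using col_card'[of k] Suc by simp
  ultimately show ?thesis using card_subset_eq[OF fin sub] by simp
qed

lemma mos_split:
  assumes "a \<le> v"
  shows "multisets_of_size {a..<Suc v} (Suc k) =
         multisets_of_size {a..<v} (Suc k) \<union> add_mset v ` multisets_of_size {a..<Suc v} k"
proof (intro set_eqI iffI)
  fix N assume N: "N \<in> multisets_of_size {a..<Suc v} (Suc k)"
  show "N \<in> multisets_of_size {a..<v} (Suc k) \<union> add_mset v ` multisets_of_size {a..<Suc v} k"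
  proof (cases "v \<in># N")
    case True
    then have "N = add_mset v (N - {#v#})" by simp
    moreover have "N - {#v#} \<in> multisets_of_size {a..<Suc v} k"
      using N True by (auto simp: multisets_of_size_def size_Diff_singleton dest: in_diffD)
    ultimately show ?thesis by blast
  next
    case False
    then have "N \<in> multisets_of_size {a..<v} (Suc k)"
      using N by (auto simp: multisets_of_size_def subset_iff less_Suc_eq)
    then show ?thesis by blast
  qed
next
  fix N assume "N \<in> multisets_of_size {a..<v} (Suc k) \<union> add_mset v ` multisets_of_size {a..<Suc v} k"
  then show "N \<in> multisets_of_size {a..<Suc v} (Suc k)"
    using assms by (auto simp: multisets_of_size_def subset_iff)
qed

section \<open>Upper closure\<close>

definition up :: "nat \<Rightarrow> nat multiset set \<Rightarrow> nat multiset set" where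
  "up k A = {N. size N = Suc k \<and> (\<forall>x\<in>#N. N - {#x#} \<in> A)}"

lemma diff_add_mset_in: "x \<in># (N'::'a multiset) \<Longrightarrow> add_mset v N' - {#x#} = add_mset v (N' - {#x#})"
  by (simp add: multiset_eq_iff)

lemma up_empty[simp]: "up k {} = {}"
proof -
  have "N = {#}" if "size N = Suc k" "\<forall>x\<in>#N. False" for N :: "nat multiset"
    using that by (simp add: multiset_eq_iff)
  then show ?thesis unfolding up_def by force
qed

lemma up_mono: "A \<subseteq> B \<Longrightarrow> up k A \<subseteq> up k B"
  unfolding up_def by auto

lemma up_elem:
  assumes k: "1 \<le> k" and N: "N \<in> up k A" and x: "x \<in># N"
  shows "\<exists>M\<in>A. x \<in># M"
proof -
  have "size (N - {#x#}) = k" using N x by (simp add: up_def size_Diff_singleton)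
  then have "N - {#x#} \<noteq> {#}" using k by auto
  then obtain y where y: "y \<in># N - {#x#}" by (meson multiset_nonemptyE)
  then have yN: "y \<in># N" by (rule in_diffD)
  have "N - {#y#} \<in> A" using N yN by (simp add: up_def)
  moreover have "x \<in># N - {#y#}" using x y by (cases "x = y") (auto simp: in_diff_count)
  ultimately show ?thesis by blast
qed

lemma up_finite:
  assumes "1 \<le> k" "finite A" shows "finite (up k A)"
proof -
  have "up k A \<subseteq> multisets_of_size (\<Union>M\<in>A. set_mset M) (Suc k)"
    using up_elem[OF assms(1)] by (auto simp: multisets_of_size_def up_def)
  moreover have "finite (multisets_of_size (\<Union>M\<in>A. set_mset M) (Suc k))"
    using assms(2) by auto
  ultimately show ?thesis by (rule finite_subset)
qed

lemma col_up: "1 \<le> k \<or> b = 0 \<Longrightarrow> up k (col p k b) = col p (Suc k) (mf k b)"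
proof (induction k arbitrary: b)
  case 0 then show ?case by simp
next
  case (Suc k)
  define m where "m = mtop (Suc k) b"
  define b1 where "b1 = b - (m choose Suc k)"
  define v where "v = p + m - k"
  define C1 where "C1 = col p k b1"
  have hi: "b < Suc m choose Suc k" using mtop_upper[of "Suc k" b] by (simp add: m_def)
  have lo: "m choose Suc k \<le> b" using mtop_lower[of "Suc k" b] by (simp add: m_def)
  have km: "k \<le> m" using decomp_le[OF hi] .
  have col: "col p (Suc k) b = multisets_of_size {p..<v} (Suc k) \<union> add_mset v ` C1"
    by (simp add: m_def b1_def v_def C1_def col.simps(2))
  have b1: "b1 < m choose k" using decomp_rem[OF lo hi] by (simp add: b1_def)
  have rng: "C1 \<subseteq> multisets_of_size {p..<Suc v} k"
    using col_range[of b1 m k p] b1 km by (simp add: v_def Suc_diff_le C1_def)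
  have C1e: "k = 0 \<Longrightarrow> C1 = {}" using b1 by (simp add: C1_def)
  have IH: "up k C1 = col p (Suc k) (mf k b1)"
    unfolding C1_def by (rule Suc.IH) (use b1 in \<open>cases k, auto\<close>)
  have pv: "p \<le> v" using km by (simp add: v_def)
  have elems: "\<And>x N. N \<in> up k C1 \<Longrightarrow> x \<in># N \<Longrightarrow> x \<in> {p..<Suc v}"
  proof -
    fix x N assume N: "N \<in> up k C1" and x: "x \<in># N"
    have "k \<noteq> 0"
    proof
      assume "k = 0" with C1e N show False by simp
    qed
    then obtain M where M: "M \<in> C1" "x \<in># M" using up_elem[of k N C1 x] N x by auto
    then have "M \<in> multisets_of_size {p..<Suc v} k" using rng by blast
    then show "x \<in> {p..<Suc v}" using M(2) by (auto simp: multisets_of_size_def)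
  qed
  have claim1: "up (Suc k) (col p (Suc k) b) =
      multisets_of_size {p..<v} (Suc (Suc k)) \<union> add_mset v ` up k C1"
  proof (intro set_eqI iffI)
    fix N assume N: "N \<in> up (Suc k) (col p (Suc k) b)"
    have el: "x \<in> {p..v}" if "x \<in># N" for x
    proof -
      have "\<exists>M\<in>col p (Suc k) b. x \<in># M"
        by (rule up_elem[of "Suc k"]) (use N that in auto)
      then obtain M where M: "M \<in> col p (Suc k) b" "x \<in># M" by blast
      show ?thesis using col_ge[OF M] col_le_top[OF M] by (simp add: m_def v_def)
    qed
    show "N \<in> multisets_of_size {p..<v} (Suc (Suc k)) \<union> add_mset v ` up k C1"
    proof (cases "v \<in># N")
      case False
      have "size N = Suc (Suc k)" using N by (simp add: up_def)
      moreover have "set_mset N \<subseteq> {p..<v}"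
      proof
        fix x assume "x \<in> set_mset N"
        then have "x \<in> {p..v}" "x \<noteq> v" using el False by auto
        then show "x \<in> {p..<v}" by auto
      qed
      ultimately have "N \<in> multisets_of_size {p..<v} (Suc (Suc k))"
        by (simp add: multisets_of_size_def)
      then show ?thesis by blast
    next
      case True
      define N' where "N' = N - {#v#}"
      have NN: "N = add_mset v N'" using True by (simp add: N'_def)
      have "N' \<in> up k C1"
        unfolding up_def
      proof (intro CollectI conjI ballI)
        show "size N' = Suc k" using N True by (simp add: up_def N'_def size_Diff_singleton)
      next
        fix x assume x: "x \<in># N'"
        have allN: "\<forall>y\<in>#N. N - {#y#} \<in> col p (Suc k) b" using N unfolding up_def by blast
        have xN: "x \<in># N" using NN x by simp
        have "N - {#x#} \<in> col p (Suc k) b" using allN xN by (rule bspec)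
        moreover have eq: "N - {#x#} = add_mset v (N' - {#x#})"
          using diff_add_mset_in[OF x, of v] NN by simp
        ultimately have inC: "add_mset v (N' - {#x#}) \<in> col p (Suc k) b" by simp
        have nM: "add_mset v (N' - {#x#}) \<notin> multisets_of_size {p..<v} (Suc k)"
          by (simp add: multisets_of_size_def)
        have "add_mset v (N' - {#x#}) \<in> multisets_of_size {p..<v} (Suc k) \<union> add_mset v ` C1"
          using inC by (simp only: col)
        then have "add_mset v (N' - {#x#}) \<in> add_mset v ` C1" using nM by blast
        then show "N' - {#x#} \<in> C1" by (simp add: image_iff)
      qed
      then show ?thesis using NN by blast
    qed
  next
    fix N assume "N \<in> multisets_of_size {p..<v} (Suc (Suc k)) \<union> add_mset v ` up k C1"
    then consider "N \<in> multisets_of_size {p..<v} (Suc (Suc k))"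
      | N' where "N = add_mset v N'" "N' \<in> up k C1" by blast
    then show "N \<in> up (Suc k) (col p (Suc k) b)"
    proof cases
      case 1
      have "N - {#x#} \<in> multisets_of_size {p..<v} (Suc k)" if "x \<in># N" for x
        using 1 that by (auto simp: multisets_of_size_def size_Diff_singleton dest: in_diffD)
      then have "\<forall>x\<in>#N. N - {#x#} \<in> col p (Suc k) b" using col by blast
      moreover have "size N = Suc (Suc k)" using 1 by (simp add: multisets_of_size_def)
      ultimately show ?thesis by (simp add: up_def)
    next
      case 2
      have sN': "size N' = Suc k" using 2 by (simp add: up_def)
      have "N - {#x#} \<in> col p (Suc k) b" if x: "x \<in># N" for x
      proof (cases "x = v")
        case True
        then have eq: "N - {#x#} = N'" using 2 by simp
        show ?thesis
        proof (cases "v \<in># N'")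
          case True
          have "N' - {#v#} \<in> C1" using 2 True by (simp add: up_def)
          moreover have "N' = add_mset v (N' - {#v#})" using True by simp
          ultimately have "N' \<in> add_mset v ` C1" by (metis imageI)
          then show ?thesis using eq col by (metis UnI2)
        next
          case False
          have "set_mset N' \<subseteq> {p..<v}"
          proof
            fix x assume "x \<in> set_mset N'"
            then have "x \<in> {p..<Suc v}" "x \<noteq> v" using elems[OF 2(2)] False by auto
            then show "x \<in> {p..<v}" by auto
          qed
          then have "N' \<in> multisets_of_size {p..<v} (Suc k)" using sN'
            by (simp add: multisets_of_size_def)
          then show ?thesis using eq col by (metis UnI1)
        qed
      next
        case False
        then have xN': "x \<in># N'" using 2 x by auto
        have "N - {#x#} = add_mset v (N' - {#x#})" using 2 False by simp
        moreover have "N' - {#x#} \<in> C1" using 2 xN' by (simp add: up_def)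
        ultimately have "N - {#x#} \<in> add_mset v ` C1" by (metis imageI)
        then show ?thesis using col by (metis UnI2)
      qed
      then show ?thesis using 2 sN' by (simp add: up_def)
    qed
  qed
  have claim2: "mf k b1 < Suc m choose Suc k"
  proof -
    have sub: "up k C1 \<subseteq> multisets_of_size {p..<Suc v} (Suc k)"
      using elems by (auto simp: up_def multisets_of_size_def)
    have cardM: "card (multisets_of_size {p..<Suc v} k) = m choose k"
      using km by (simp add: card_multisets_of_size v_def Suc_diff_le)
    have cardC1: "card C1 = b1"
    proof (cases k)
      case 0 then show ?thesis using C1e b1 by simp
    next
      case (Suc k') then show ?thesis using col_card'[of k p b1] by (simp add: C1_def)
    qed
    have "C1 \<noteq> multisets_of_size {p..<Suc v} k" using cardC1 cardM b1 by auto
    then obtain M where M: "M \<in> multisets_of_size {p..<Suc v} k" "M \<notin> C1" using rng by blast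
    have "add_mset v M \<in> multisets_of_size {p..<Suc v} (Suc k)"
      using M pv by (auto simp: multisets_of_size_def)
    moreover have "add_mset v M \<notin> up k C1" using M by (auto simp: up_def)
    ultimately have ps: "up k C1 \<subset> multisets_of_size {p..<Suc v} (Suc k)" using sub by blast
    have "card (up k C1) < card (multisets_of_size {p..<Suc v} (Suc k))"
      by (rule psubset_card_mono) (use ps in auto)
    also have "\<dots> = Suc m choose Suc k"
      using km by (simp add: card_multisets_of_size v_def Suc_diff_le)
    finally have "card (up k C1) < Suc m choose Suc k" .
    moreover have "card (up k C1) = mf k b1" using IH col_card'[of "Suc k" p "mf k b1"] by simp
    ultimately show ?thesis by simp
  qed
  have mfb: "mf (Suc k) b = (Suc m choose Suc (Suc k)) + mf k b1"
    by (simp add: m_def b1_def mf.simps(2))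
  have "col p (Suc (Suc k)) (mf (Suc k) b) =
      multisets_of_size {p..<p + Suc m - Suc k} (Suc (Suc k)) \<union>
      add_mset (p + Suc m - Suc k) ` col p (Suc k) (mf (Suc k) b - (Suc m choose Suc (Suc k)))"
    by (rule col_decomp) (use mfb claim2 in auto)
  also have "\<dots> = multisets_of_size {p..<v} (Suc (Suc k)) \<union> add_mset v ` col p (Suc k) (mf k b1)"
    using km mfb by (simp add: v_def)
  finally show ?case using claim1 IH by simp
qed

lemma col_nop: "\<exists>c. {M \<in> col p k b. p \<notin># M} = col (Suc p) k c \<and> (1 \<le> k \<or> c \<le> 1)"
proof (induction k arbitrary: b)
  case 0
  show ?case by (rule exI[of _ "min b 1"]) auto
next
  case (Suc k)
  show ?case
  proof (cases "b = 0")
    case True then show ?thesis by (intro exI[of _ 0]) simp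
  next
    case False
    define m where "m = mtop (Suc k) b"
    define b1 where "b1 = b - (m choose Suc k)"
    define v where "v = p + m - k"
    define C1 where "C1 = col p k b1"
    have hi: "b < Suc m choose Suc k" using mtop_upper[of "Suc k" b] by (simp add: m_def)
    have lo: "m choose Suc k \<le> b" using mtop_lower[of "Suc k" b] by (simp add: m_def)
    have km: "Suc k \<le> m"
    proof (rule ccontr)
      assume "\<not> Suc k \<le> m"
      then have "Suc m \<le> Suc k" by simp
      then have "Suc m choose Suc k \<le> 1"
        by (metis One_nat_def binomial_n_n binomial_right_mono)
      with hi False show False by simp
    qed
    have col: "col p (Suc k) b = multisets_of_size {p..<v} (Suc k) \<union> add_mset v ` C1"
      by (simp add: m_def b1_def v_def C1_def col.simps(2))
    have b1: "b1 < m choose k" using decomp_rem[OF lo hi] by (simp add: b1_def)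
    have rng: "C1 \<subseteq> multisets_of_size {p..<Suc v} k"
      using col_range[of b1 m k p] b1 km by (simp add: v_def Suc_diff_le C1_def)
    have pv: "Suc p \<le> v" using km by (simp add: v_def)
    obtain c1 where c1: "{M \<in> C1. p \<notin># M} = col (Suc p) k c1" "1 \<le> k \<or> c1 \<le> 1"
      using Suc.IH[of b1] unfolding C1_def by blast
    define D1 where "D1 = col (Suc p) k c1"
    have cardD1: "card D1 = c1" using c1(2) col_card[of "Suc p" k c1] by (auto simp: D1_def)
    have D1sub: "D1 \<subseteq> multisets_of_size {Suc p..<Suc v} k"
    proof
      fix M assume "M \<in> D1"
      then have M: "M \<in> C1" "p \<notin># M" using c1(1) by (auto simp: D1_def)
      then have "M \<in> multisets_of_size {p..<Suc v} k" using rng by blast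
      then show "M \<in> multisets_of_size {Suc p..<Suc v} k" using M(2)
        by (auto simp: multisets_of_size_def subset_iff Suc_le_eq order.order_iff_strict)
    qed
    have cardU: "card (multisets_of_size {Suc p..<Suc v} k) = (m - 1) choose k"
      using km by (simp add: card_multisets_of_size v_def)
    have c1le: "c1 \<le> (m - 1) choose k"
      using card_mono[OF _ D1sub] cardD1 cardU by auto
    have nop: "{M \<in> col p (Suc k) b. p \<notin># M} =
        multisets_of_size {Suc p..<v} (Suc k) \<union> add_mset v ` D1"
    proof (intro set_eqI iffI)
      fix M assume "M \<in> {M \<in> col p (Suc k) b. p \<notin># M}"
      then have M: "M \<in> col p (Suc k) b" "p \<notin># M" by auto
      from M(1) consider "M \<in> multisets_of_size {p..<v} (Suc k)"
        | M' where "M = add_mset v M'" "M' \<in> C1" unfolding col by blast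
      then show "M \<in> multisets_of_size {Suc p..<v} (Suc k) \<union> add_mset v ` D1"
      proof cases
        case 1
        then have "M \<in> multisets_of_size {Suc p..<v} (Suc k)" using M(2)
          by (auto simp: multisets_of_size_def subset_iff Suc_le_eq order.order_iff_strict)
        then show ?thesis by blast
      next
        case 2
        then have "p \<notin># M'" using M(2) by simp
        then have "M' \<in> D1" using 2 c1(1) by (auto simp: D1_def)
        then show ?thesis using 2 by blast
      qed
    next
      fix M assume M: "M \<in> multisets_of_size {Suc p..<v} (Suc k) \<union> add_mset v ` D1"
      then consider "M \<in> multisets_of_size {Suc p..<v} (Suc k)"
        | M' where "M = add_mset v M'" "M' \<in> D1" by blast
      then show "M \<in> {M \<in> col p (Suc k) b. p \<notin># M}"
      proof cases
        case 1
        then have "M \<in> multisets_of_size {p..<v} (Suc k)" "p \<notin># M"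
          by (auto simp: multisets_of_size_def subset_iff)
        then show ?thesis unfolding col by blast
      next
        case 2
        then have "M' \<in> C1" "p \<notin># M'" using c1(1) by (auto simp: D1_def)
        then have "M \<in> col p (Suc k) b" using 2 unfolding col by blast
        moreover have "p \<notin># M" using 2 \<open>p \<notin># M'\<close> pv by simp
        ultimately show ?thesis by blast
      qed
    qed
    show ?thesis
    proof (cases "c1 < (m - 1) choose k")
      case True
      define c where "c = ((m - 1) choose Suc k) + c1"
      have "col (Suc p) (Suc k) c = multisets_of_size {Suc p..<Suc p + (m - 1) - k} (Suc k) \<union>
          add_mset (Suc p + (m - 1) - k) ` col (Suc p) k (c - ((m - 1) choose Suc k))"
      proof (rule col_decomp)
        show "(m - 1) choose Suc k \<le> c" by (simp add: c_def)
        have "Suc (m - 1) = m" using km by simp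
        then have "Suc (m - 1) choose Suc k = ((m - 1) choose k) + ((m - 1) choose Suc k)"
          by (metis binomial_Suc_Suc)
        then show "c < Suc (m - 1) choose Suc k" using True by (simp add: c_def)
      qed
      also have "\<dots> = multisets_of_size {Suc p..<v} (Suc k) \<union> add_mset v ` D1"
        using km by (simp add: c_def D1_def v_def)
      finally show ?thesis using nop by (intro exI[of _ c]) simp
    next
      case False
      then have eqc: "c1 = (m - 1) choose k" using c1le by simp
      have D1full: "D1 = multisets_of_size {Suc p..<Suc v} k"
        using card_subset_eq[OF _ D1sub] cardD1 cardU eqc by auto
      have "multisets_of_size {Suc p..<v} (Suc k) \<union> add_mset v ` D1 =
          multisets_of_size {Suc p..<Suc v} (Suc k)"
        using mos_split[of "Suc p" v k] pv D1full by simp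
      also have "\<dots> = col (Suc p) (Suc k) (m choose Suc k)"
      proof -
        have "Suc (p + m) - k = Suc (p + m - k)" using km by (simp add: Suc_diff_le)
        then show ?thesis using col_full[of "Suc p" "Suc k" m] by (simp add: v_def)
      qed
      finally show ?thesis using nop by (intro exI[of _ "m choose Suc k"]) simp
    qed
  qed
qed

lemma card_up_col: "1 \<le> k \<Longrightarrow> card (up k (col p k b)) = mf k b"
  using col_up[of k b p] col_card'[of "Suc k" p "mf k b"] by simp

lemma mf_mono:
  assumes "1 \<le> k" "b \<le> c" shows "mf k b \<le> mf k c"
proof -
  have "up k (col 0 k b) \<subseteq> up k (col 0 k c)" by (rule up_mono[OF col_mono[OF assms(2)]])
  then have "card (up k (col 0 k b)) \<le> card (up k (col 0 k c))"
    by (rule card_mono[OF up_finite[OF assms(1) col_finite]])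
  then show ?thesis using card_up_col[OF assms(1)] by simp
qed

lemma split_card:
  fixes A :: "nat multiset set"
  assumes "finite A"
  shows "card A = card {N. add_mset q N \<in> A} + card {M \<in> A. q \<notin># M}"
    and "finite {N. add_mset q N \<in> A}"
proof -
  have inj: "inj_on (add_mset q) X" for X by (simp add: inj_on_def)
  have sub: "add_mset q ` {N. add_mset q N \<in> A} \<subseteq> A" by auto
  show fin: "finite {N. add_mset q N \<in> A}"
    using finite_subset[OF sub assms] finite_image_iff[OF inj] by blast
  have eq: "A = add_mset q ` {N. add_mset q N \<in> A} \<union> {M \<in> A. q \<notin># M}"
  proof (intro set_eqI iffI)
    fix M assume M: "M \<in> A"
    show "M \<in> add_mset q ` {N. add_mset q N \<in> A} \<union> {M \<in> A. q \<notin># M}"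
    proof (cases "q \<in># M")
      case True
      then have "M = add_mset q (M - {#q#})" by simp
      then show ?thesis using M by (metis (mono_tags, lifting) UnI1 imageI mem_Collect_eq)
    qed (use M in auto)
  qed auto
  have "card A = card (add_mset q ` {N. add_mset q N \<in> A}) + card {M \<in> A. q \<notin># M}"
    by (subst eq, rule card_Un_disjoint) (use fin assms in auto)
  then show "card A = card {N. add_mset q N \<in> A} + card {M \<in> A. q \<notin># M}"
    by (simp add: card_image[OF inj])
qed

lemma Nlem:
  assumes k: "1 \<le> k" and y: "card {N. add_mset q N \<in> col q k x} \<le> y"
  shows "x + mf k (x - y) \<le> mf k x"
proof -
  define C where "C = col q k x"
  obtain c where c: "{M \<in> C. q \<notin># M} = col (Suc q) k c" using col_nop[of q k x] C_def by blast
  have cardc: "card {M \<in> C. q \<notin># M} = c" using c col_card'[OF k] by simp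
  have cardC: "card C = x" using col_card'[OF k] by (simp add: C_def)
  have sp: "card C = card {N. add_mset q N \<in> C} + c" using split_card[of C q] cardc by (simp add: C_def)
  define C0 where "C0 = {M \<in> C. q \<notin># M}"
  have upeq: "up k C = add_mset q ` C \<union> up k C0"
  proof (intro set_eqI iffI)
    fix N assume N: "N \<in> up k C"
    show "N \<in> add_mset q ` C \<union> up k C0"
    proof (cases "q \<in># N")
      case True
      then have "N - {#q#} \<in> C" using N by (simp add: up_def)
      moreover have "N = add_mset q (N - {#q#})" using True by simp
      ultimately show ?thesis by (metis UnI1 imageI)
    next
      case False
      have "N - {#z#} \<in> C0" if "z \<in># N" for z
        using N that False by (auto simp: up_def C0_def dest: in_diffD)
      then have "N \<in> up k C0" using N by (simp add: up_def)
      then show ?thesis by blast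
    qed
  next
    fix N assume "N \<in> add_mset q ` C \<union> up k C0"
    then consider M where "N = add_mset q M" "M \<in> C" | "N \<in> up k C0" by blast
    then show "N \<in> up k C"
    proof cases
      case 1
      have "N - {#z#} \<in> C" if z: "z \<in># N" for z
      proof (cases "z = q")
        case True then show ?thesis using 1 by simp
      next
        case False
        then have zM: "z \<in># M" using 1 z by simp
        have "q \<le> z" using col_ge[of M q k x z] 1 zM by (simp add: C_def)
        then have "add_mset q (M - {#z#}) \<in> C"
          using col_borel[of M q k x z q] 1 zM False by (simp add: C_def)
        moreover have "N - {#z#} = add_mset q (M - {#z#})" using 1 zM by (simp add: diff_add_mset_in)
        ultimately show ?thesis by simp
      qed
      moreover have "size N = Suc k" using 1 col_size[of M q k x] by (simp add: C_def)
      ultimately show ?thesis by (simp add: up_def)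
    next
      case 2
      then show ?thesis using up_mono[of C0 C k] by (auto simp: C0_def)
    qed
  qed
  have disj: "add_mset q ` C \<inter> up k C0 = {}"
  proof -
    have nq: "q \<notin># N" if "N \<in> up k C0" for N
      using up_elem[OF k that] by (auto simp: C0_def)
    show ?thesis
    proof (rule ccontr)
      assume "add_mset q ` C \<inter> up k C0 \<noteq> {}"
      then obtain N where "N \<in> add_mset q ` C" "N \<in> up k C0" by blast
      then show False using nq by force
    qed
  qed
  have finC0: "finite C0" by (simp add: C0_def C_def)
  have "card (up k C) = card (add_mset q ` C) + card (up k C0)"
    unfolding upeq by (rule card_Un_disjoint) (use finC0 up_finite[OF k finC0] disj in \<open>auto simp: C_def\<close>)
  also have "card (add_mset q ` C) = x" using cardC by (simp add: card_image inj_on_def)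
  also have "card (up k C0) = mf k c" using c card_up_col[OF k] by (simp add: C0_def)
  finally have "mf k x = x + mf k c" using card_up_col[OF k] by (simp add: C_def)
  moreover have "x - y \<le> c" using sp cardC y by (simp add: C_def)
  then have "mf k (x - y) \<le> mf k c" by (rule mf_mono[OF k])
  ultimately show ?thesis by simp
qed

definition borel :: "nat \<Rightarrow> nat multiset set \<Rightarrow> bool" where
  "borel p A \<longleftrightarrow> (\<forall>M\<in>A. \<forall>x\<in>#M. p \<le> x) \<and>
     (\<forall>M\<in>A. \<forall>x\<in>#M. \<forall>y. p \<le> y \<longrightarrow> y < x \<longrightarrow> add_mset y (M - {#x#}) \<in> A)"

lemma borel_move: "borel p A \<Longrightarrow> M \<in> A \<Longrightarrow> x \<in># M \<Longrightarrow> add_mset p (M - {#x#}) \<in> A"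
  unfolding borel_def
  by (metis le_neq_implies_less insert_DiffM order_refl)

lemma core_step:
  assumes IHk: "\<And>k' p A. 1 \<le> k' \<Longrightarrow> k' < k \<Longrightarrow> finite A \<Longrightarrow> (\<forall>M\<in>A. size M = k') \<Longrightarrow> borel p A
      \<Longrightarrow> card (up k' A) \<le> mf k' (card A)"
  and k: "1 \<le> k"
  shows "finite A \<Longrightarrow> (\<forall>M\<in>A. size M = k) \<Longrightarrow> borel p A \<Longrightarrow> card (up k A) \<le> mf k (card A)"
proof (induction "card A" arbitrary: p A rule: less_induct)
  case less
  note fin = less.prems(1) and sz = less.prems(2) and bo = less.prems(3)
  show ?case
  proof (cases "A = {}")
    case True then show ?thesis by simp
  next
    case False
    define A1 where "A1 = {N. add_mset p N \<in> A}"
    define A0 where "A0 = {M \<in> A. p \<notin># M}"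
    have sp: "card A = card A1 + card A0" and finA1: "finite A1"
      using split_card[OF fin, of p] by (simp_all add: A1_def A0_def)
    obtain M where M: "M \<in> A" using False by blast
    have "size M = k" using sz M by simp
    then have "M \<noteq> {#}" using k by auto
    then obtain z where z: "z \<in># M" by (meson multiset_nonemptyE)
    have "M - {#z#} \<in> A1" using borel_move[OF bo M z] by (simp add: A1_def)
    then have A1ne: "A1 \<noteq> {}" by blast
    then have y1: "1 \<le> card A1" using finA1 by (simp add: Suc_le_eq card_gt_0_iff)
    have lt: "card A0 < card A" using sp y1 by simp
    have finA0: "finite A0" using fin by (simp add: A0_def)
    have szA0: "\<forall>M\<in>A0. size M = k" using sz by (simp add: A0_def)
    have boA0: "borel (Suc p) A0"
      unfolding borel_def
    proof (intro conjI ballI allI impI)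
      fix M x assume "M \<in> A0" "x \<in># M"
      then show "Suc p \<le> x" using bo unfolding borel_def A0_def
        by (metis (mono_tags, lifting) Suc_leI le_neq_implies_less mem_Collect_eq)
    next
      fix M x y assume M: "M \<in> A0" and x: "x \<in># M" and y: "Suc p \<le> y" "y < x"
      have "add_mset y (M - {#x#}) \<in> A" using bo M x y unfolding borel_def A0_def by auto
      moreover have "p \<notin># add_mset y (M - {#x#})" using M y by (auto simp: A0_def dest: in_diffD)
      ultimately show "add_mset y (M - {#x#}) \<in> A0" by (simp add: A0_def)
    qed
    have IH0: "card (up k A0) \<le> mf k (card A0)"
      using less.hyps[OF lt finA0 szA0 boA0] .
    have upsub: "up k A \<subseteq> add_mset p ` A \<union> up k A0"
    proof
      fix N assume N: "N \<in> up k A"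
      show "N \<in> add_mset p ` A \<union> up k A0"
      proof (cases "p \<in># N")
        case True
        then have "N - {#p#} \<in> A" using N by (simp add: up_def)
        moreover have "N = add_mset p (N - {#p#})" using True by simp
        ultimately show ?thesis by (metis UnI1 imageI)
      next
        case False
        have "N - {#z#} \<in> A0" if "z \<in># N" for z
          using N that False by (auto simp: up_def A0_def dest: in_diffD)
        then have "N \<in> up k A0" using N by (simp add: up_def)
        then show ?thesis by blast
      qed
    qed
    have "card (up k A) \<le> card (add_mset p ` A \<union> up k A0)"
      by (rule card_mono[OF _ upsub]) (use fin up_finite[OF k finA0] in auto)
    also have "\<dots> \<le> card (add_mset p ` A) + card (up k A0)" by (rule card_Un_le)
    also have "\<dots> \<le> card A + mf k (card A - card A1)"
      using IH0 sp by (simp add: card_image inj_on_def)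
    finally have bound: "card (up k A) \<le> card A + mf k (card A - card A1)" .
    have ysm: "card {N. add_mset 0 N \<in> col 0 k (card A)} \<le> card A1"
    proof (cases "k = 1")
      case True
      have "{N. add_mset 0 N \<in> col 0 k (card A)} \<subseteq> {{#}}"
      proof
        fix N assume "N \<in> {N. add_mset 0 N \<in> col 0 k (card A)}"
        then have "add_mset 0 N \<in> col 0 k (card A)" by simp
        then have "size (add_mset 0 N) = k" by (rule col_size)
        then have "size N = 0" using True by simp
        then show "N \<in> {{#}}" by simp
      qed
      then have "card {N. add_mset 0 N \<in> col 0 k (card A)} \<le> card {{#}::nat multiset}"
        by (rule card_mono[rotated]) simp
      then have "card {N. add_mset 0 N \<in> col 0 k (card A)} \<le> 1" by simp
      then show ?thesis using y1 by simp
    next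
      case False
      then have k2: "1 \<le> k - 1" "k - 1 < k" using k by auto
      have szA1: "\<forall>N\<in>A1. size N = k - 1" using sz by (auto simp: A1_def)
      have boA1: "borel p A1"
        unfolding borel_def
      proof (intro conjI ballI allI impI)
        fix N x assume "N \<in> A1" "x \<in># N"
        then show "p \<le> x" using bo unfolding borel_def A1_def by auto
      next
        fix N x y assume N: "N \<in> A1" and x: "x \<in># N" and y: "p \<le> y" "y < x"
        have "add_mset y (add_mset p N - {#x#}) \<in> A"
          using bo N x y unfolding borel_def A1_def by auto
        moreover have "add_mset y (add_mset p N - {#x#}) = add_mset p (add_mset y (N - {#x#}))"
          using x by (simp add: diff_add_mset_in add_mset_commute)
        ultimately show "add_mset y (N - {#x#}) \<in> A1" by (simp add: A1_def)
      qed
      have IH1: "card (up (k - 1) A1) \<le> mf (k - 1) (card A1)"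
        using IHk[OF k2 finA1 szA1 boA1] .
      have Asub: "A \<subseteq> up (k - 1) A1"
      proof
        fix M assume M: "M \<in> A"
        have "M - {#z#} \<in> A1" if "z \<in># M" for z
          using borel_move[OF bo M that] by (simp add: A1_def)
        moreover have "size M = Suc (k - 1)" using sz M k by simp
        ultimately show "M \<in> up (k - 1) A1" by (simp add: up_def)
      qed
      have "card A \<le> card (up (k - 1) A1)"
        by (rule card_mono[OF up_finite[OF k2(1) finA1] Asub])
      with IH1 have xle: "card A \<le> mf (k - 1) (card A1)" by simp
      have "col 0 k (card A) \<subseteq> col 0 k (mf (k - 1) (card A1))" by (rule col_mono[OF xle])
      also have "\<dots> = up (k - 1) (col 0 (k - 1) (card A1))"
        using col_up[of "k - 1" "card A1" 0] k2 k by simp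
      finally have csub: "col 0 k (card A) \<subseteq> up (k - 1) (col 0 (k - 1) (card A1))" .
      have "{N. add_mset 0 N \<in> col 0 k (card A)} \<subseteq> col 0 (k - 1) (card A1)"
      proof
        fix N assume "N \<in> {N. add_mset 0 N \<in> col 0 k (card A)}"
        then have "add_mset 0 N \<in> up (k - 1) (col 0 (k - 1) (card A1))" using csub by blast
        then show "N \<in> col 0 (k - 1) (card A1)" by (simp add: up_def)
      qed
      then have "card {N. add_mset 0 N \<in> col 0 k (card A)} \<le> card (col 0 (k - 1) (card A1))"
        by (rule card_mono[OF col_finite])
      then show ?thesis using col_card'[OF k2(1)] by simp
    qed
    show ?thesis using bound Nlem[OF k ysm] by simp
  qed
qed

lemma core:
  "1 \<le> k \<Longrightarrow> finite A \<Longrightarrow> (\<forall>M\<in>A. size M = k) \<Longrightarrow> borel p A \<Longrightarrow> card (up k A) \<le> mf k (card A)"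
proof (induction k arbitrary: p A rule: less_induct)
  case (less k)
  show ?case by (rule core_step[of k]) (use less in auto)
qed


section \<open>Compression\<close>

definition rest :: "nat \<Rightarrow> nat \<Rightarrow> nat multiset \<Rightarrow> nat multiset" where
  "rest i j M = filter_mset (\<lambda>z. z \<noteq> i \<and> z \<noteq> j) M"
definition tot :: "nat \<Rightarrow> nat \<Rightarrow> nat multiset \<Rightarrow> nat" where
  "tot i j M = count M i + count M j"
definition mk :: "nat \<Rightarrow> nat \<Rightarrow> nat multiset \<Rightarrow> nat \<Rightarrow> nat \<Rightarrow> nat multiset" where
  "mk i j R c a = R + replicate_mset a i + replicate_mset (c - a) j"
definition key :: "nat \<Rightarrow> nat \<Rightarrow> nat multiset \<Rightarrow> nat multiset \<times> nat" where
  "key i j M = (rest i j M, tot i j M)"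
definition fib :: "nat \<Rightarrow> nat \<Rightarrow> nat multiset set \<Rightarrow> nat multiset \<Rightarrow> nat \<Rightarrow> nat set" where
  "fib i j X R c = {a. a \<le> c \<and> mk i j R c a \<in> X}"
definition cmpr :: "nat \<Rightarrow> nat \<Rightarrow> nat multiset set \<Rightarrow> nat multiset set" where
  "cmpr i j B = {N. \<exists>M\<in>B. key i j N = key i j M \<and>
      tot i j N < count N i + card (fib i j B (rest i j N) (tot i j N))}"
definition shadow :: "nat multiset set \<Rightarrow> nat multiset set" where
  "shadow B = {M - {#x#} | M x. M \<in> B \<and> x \<in># M}"

definition noij :: "nat \<Rightarrow> nat \<Rightarrow> nat multiset \<Rightarrow> bool" where
  "noij i j R \<longleftrightarrow> i \<notin># R \<and> j \<notin># R"

lemma seg_sum: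
  fixes g :: "nat \<Rightarrow> nat"
  assumes A: "A \<subseteq> {0..c}" and dec: "\<And>a b. a < b \<Longrightarrow> b \<le> c \<Longrightarrow> g b < g a"
  shows "sum g {a. a \<le> c \<and> c < a + card A} \<le> sum g A \<and>
         (A \<noteq> {a. a \<le> c \<and> c < a + card A} \<longrightarrow> sum g {a. a \<le> c \<and> c < a + card A} < sum g A)"
proof -
  define T where "T = {a. a \<le> c \<and> c < a + card A}"
  have finA: "finite A" using finite_subset[OF A] by blast
  have finT: "finite T" by (simp add: T_def)
  have cA: "card A \<le> Suc c" using card_mono[OF _ A] by simp
  have cT: "card T = card A"
  proof -
    have "T = {Suc c - card A..c}" using cA by (auto simp: T_def)
    then show ?thesis using cA by simp
  qed
  have cD: "card (A - T) = card (T - A)"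
    using card_Diff_subset_Int[of "A \<inter> T" A] card_Diff_subset_Int[of "A \<inter> T" T] finA finT cT
    by (simp add: Diff_Int2 Int_commute card_Diff_subset_Int)
  have sA: "sum g A = sum g (A \<inter> T) + sum g (A - T)" by (rule sum.Int_Diff[OF finA])
  have sT: "sum g T = sum g (T \<inter> A) + sum g (T - A)" by (rule sum.Int_Diff[OF finT])
  show ?thesis
  proof (cases "A - T = {}")
    case True
    then have "card (T - A) = 0" using cD by (simp only: card.empty)
    then have "T - A = {}" using finT by simp
    then have "A = T" using True by blast
    then show ?thesis by (simp add: T_def)
  next
    case False
    define L where "L = c - card A"
    obtain a0 where a0: "a0 \<in> A - T" using False by blast
    have a0c: "a0 + card A \<le> c" using a0 A by (auto simp: T_def)
    have D1: "a \<le> L" if "a \<in> A - T" for a using that A by (auto simp: T_def L_def)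
    have D2: "Suc L \<le> b \<and> b \<le> c" if "b \<in> T - A" for b using that a0c by (auto simp: T_def L_def)
    have cA1: "0 < card A" using a0 finA by (auto simp: card_gt_0_iff)
    have Lc: "Suc L \<le> c" using a0c cA1 by (simp add: L_def)
    have g1: "g L \<le> g a" if "a \<in> A - T" for a
      using D1[OF that] dec[of a L] Lc by (cases "a = L") auto
    have g2: "g b \<le> g (Suc L)" if "b \<in> T - A" for b
      using D2[OF that] dec[of "Suc L" b] by (cases "b = Suc L") auto
    have g3: "g (Suc L) < g L" using dec[of L "Suc L"] Lc by simp
    have r: "card (A - T) > 0" using False finA by (simp add: card_gt_0_iff)
    have "sum g (T - A) \<le> card (T - A) * g (Suc L)"
      using sum_bounded_above[of "T - A" g "g (Suc L)"] g2 by simp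
    also have "\<dots> < card (A - T) * g L" using cD r g3 by simp
    also have "\<dots> \<le> sum g (A - T)"
      using sum_bounded_below[of "A - T" "g L" g] g1 by simp
    finally have "sum g (T - A) < sum g (A - T)" .
    then have "sum g T < sum g A" using sA sT by (simp add: Int_commute)
    then show ?thesis by (simp add: T_def)
  qed
qed

context
  fixes i j :: nat
  assumes ij: "i \<noteq> j"
begin

lemma mk_decomp: "M = mk i j (rest i j M) (tot i j M) (count M i)"
  using ij by (auto simp: multiset_eq_iff mk_def rest_def tot_def)

lemma rest_noij: "noij i j (rest i j M)"
  by (simp add: noij_def rest_def)

lemma count_le_tot: "count M i \<le> tot i j M"
  by (simp add: tot_def)

lemma mk_props:
  assumes "noij i j R" "a \<le> c"
  shows "rest i j (mk i j R c a) = R" "tot i j (mk i j R c a) = c" "count (mk i j R c a) i = a"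
  using assms ij
  by (auto simp: multiset_eq_iff mk_def rest_def tot_def noij_def not_in_iff)

lemma key_mk: "noij i j R \<Longrightarrow> a \<le> c \<Longrightarrow> key i j (mk i j R c a) = (R, c)"
  using mk_props by (simp add: key_def)

lemma mk_inj:
  assumes "noij i j R" "a \<le> c" "noij i j R'" "a' \<le> c'" "mk i j R c a = mk i j R' c' a'"
  shows "R = R' \<and> c = c' \<and> a = a'"
  using mk_props[OF assms(1,2)] mk_props[OF assms(3,4)] assms(5) by metis

lemma size_mk: "a \<le> c \<Longrightarrow> size (mk i j R c a) = size R + c"
  by (simp add: mk_def)

lemma set_mk: "set_mset (mk i j R c a) \<subseteq> set_mset R \<union> {i, j}"
  by (auto simp: mk_def)

lemma set_rest: "set_mset (rest i j M) \<subseteq> set_mset M"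
  by (auto simp: rest_def)

lemma sum_mk: "a \<le> c \<Longrightarrow> sum_mset (mk i j R c a) = sum_mset R + a * i + (c - a) * j"
  by (simp add: mk_def sum_mset_replicate_mset)

lemma mk_minus_j: "a < c \<Longrightarrow> mk i j R c a - {#j#} = mk i j R (c - 1) a"
  using ij by (auto simp: multiset_eq_iff mk_def)

lemma mk_minus_i: "1 \<le> a \<Longrightarrow> a \<le> c \<Longrightarrow> mk i j R c a - {#i#} = mk i j R (c - 1) (a - 1)"
  using ij by (auto simp: multiset_eq_iff mk_def)

lemma mk_minus_z: "z \<in># R \<Longrightarrow> mk i j R c a - {#z#} = mk i j (R - {#z#}) c a"
  by (auto simp: multiset_eq_iff mk_def)

lemma mk_shift: "a < c \<Longrightarrow> mk i j R c (Suc a) = add_mset i (mk i j R c a - {#j#})"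
  using ij by (auto simp: multiset_eq_iff mk_def)

lemma fib_sub: "fib i j X R c \<subseteq> {0..c}"
  by (auto simp: fib_def)

lemma fib_finite[simp]: "finite (fib i j X R c)"
  using finite_subset[OF fib_sub] by blast

lemma fiber_eq:
  assumes "noij i j R"
  shows "{M \<in> X. key i j M = (R, c)} = mk i j R c ` fib i j X R c"
proof (intro set_eqI iffI)
  fix M assume M: "M \<in> {M \<in> X. key i j M = (R, c)}"
  then have "rest i j M = R" "tot i j M = c" by (auto simp: key_def)
  then have "M = mk i j R c (count M i)" using mk_decomp[of M] by simp
  moreover have "count M i \<le> c" using count_le_tot[of M] \<open>tot i j M = c\<close> by simp
  ultimately show "M \<in> mk i j R c ` fib i j X R c" using M by (auto simp: fib_def)
next
  fix M assume "M \<in> mk i j R c ` fib i j X R c"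
  then obtain a where "a \<le> c" "mk i j R c a \<in> X" "M = mk i j R c a" by (auto simp: fib_def)
  then show "M \<in> {M \<in> X. key i j M = (R, c)}" using key_mk[OF assms] by simp
qed

lemma inj_mk: "noij i j R \<Longrightarrow> inj_on (mk i j R c) (fib i j X R c)"
  unfolding inj_on_def fib_def using mk_inj by blast

lemma sum_fibers:
  fixes g :: "nat multiset \<Rightarrow> nat"
  assumes "finite X"
  shows "sum g X = (\<Sum>\<kappa>\<in>key i j ` X. \<Sum>a\<in>fib i j X (fst \<kappa>) (snd \<kappa>). g (mk i j (fst \<kappa>) (snd \<kappa>) a))"
proof -
  have "sum g X = (\<Sum>\<kappa>\<in>key i j ` X. sum g {M \<in> X. key i j M = \<kappa>})"
    by (rule sum.image_gen[OF assms])
  also have "\<dots> = (\<Sum>\<kappa>\<in>key i j ` X. \<Sum>a\<in>fib i j X (fst \<kappa>) (snd \<kappa>). g (mk i j (fst \<kappa>) (snd \<kappa>) a))"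
  proof (rule sum.cong[OF refl])
    fix \<kappa> assume "\<kappa> \<in> key i j ` X"
    then obtain M where "M \<in> X" "\<kappa> = key i j M" by blast
    then have nR: "noij i j (fst \<kappa>)" using rest_noij by (simp add: key_def)
    have "{M \<in> X. key i j M = \<kappa>} = mk i j (fst \<kappa>) (snd \<kappa>) ` fib i j X (fst \<kappa>) (snd \<kappa>)"
      using fiber_eq[OF nR, of X "snd \<kappa>"] by simp
    then show "sum g {M \<in> X. key i j M = \<kappa>} = (\<Sum>a\<in>fib i j X (fst \<kappa>) (snd \<kappa>). g (mk i j (fst \<kappa>) (snd \<kappa>) a))"
      using sum.reindex[OF inj_mk[OF nR]] by (simp add: o_def)
  qed
  finally show ?thesis .
qed

lemma card_fibers:
  assumes "finite X"
  shows "card X = (\<Sum>\<kappa>\<in>key i j ` X. card (fib i j X (fst \<kappa>) (snd \<kappa>)))"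
  using sum_fibers[OF assms, of "\<lambda>_. 1"] by simp

lemma fib_cmpr:
  assumes "(R, c) \<in> key i j ` B"
  shows "fib i j (cmpr i j B) R c = {a. a \<le> c \<and> c < a + card (fib i j B R c)}"
proof -
  obtain M where M: "M \<in> B" "key i j M = (R, c)" using assms by auto
  have nR: "noij i j R" using M rest_noij by (auto simp: key_def)
  show ?thesis
  proof (intro set_eqI iffI)
    fix a assume "a \<in> fib i j (cmpr i j B) R c"
    then have a: "a \<le> c" "mk i j R c a \<in> cmpr i j B" by (auto simp: fib_def)
    then show "a \<in> {a. a \<le> c \<and> c < a + card (fib i j B R c)}"
      using mk_props[OF nR a(1)] by (auto simp: cmpr_def)
  next
    fix a assume a: "a \<in> {a. a \<le> c \<and> c < a + card (fib i j B R c)}"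
    then have a1: "a \<le> c" "c < a + card (fib i j B R c)" by auto
    have "key i j (mk i j R c a) = key i j M" using key_mk[OF nR a1(1)] M(2) by simp
    moreover have "tot i j (mk i j R c a) < count (mk i j R c a) i +
        card (fib i j B (rest i j (mk i j R c a)) (tot i j (mk i j R c a)))"
      using mk_props[OF nR a1(1)] a1(2) by simp
    ultimately have "mk i j R c a \<in> cmpr i j B" using M(1) unfolding cmpr_def by blast
    then show "a \<in> fib i j (cmpr i j B) R c" using a by (auto simp: fib_def)
  qed
qed

lemma fib_nonempty:
  assumes "M \<in> X" shows "count M i \<in> fib i j X (rest i j M) (tot i j M)"
  using assms mk_decomp[of M] count_le_tot[of M] by (auto simp: fib_def)

lemma key_cmpr: "key i j ` cmpr i j B = key i j ` B"
proof (intro set_eqI iffI)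
  fix \<kappa> assume "\<kappa> \<in> key i j ` cmpr i j B"
  then show "\<kappa> \<in> key i j ` B" by (auto simp: cmpr_def)
next
  fix \<kappa> assume k: "\<kappa> \<in> key i j ` B"
  then obtain M where M: "M \<in> B" "\<kappa> = key i j M" by blast
  define R c where "R = rest i j M" and "c = tot i j M"
  have nR: "noij i j R" by (simp add: R_def rest_noij)
  have "count M i \<in> fib i j B R c" using fib_nonempty[OF M(1)] by (simp add: R_def c_def)
  then have "card (fib i j B R c) \<ge> 1" using fib_finite
    by (metis One_nat_def Suc_leI card_gt_0_iff empty_iff)
  then have "c \<in> fib i j (cmpr i j B) R c"
    using fib_cmpr[of R c B] k M by (auto simp: R_def c_def key_def)
  then have "mk i j R c c \<in> cmpr i j B" by (simp add: fib_def)
  moreover have "key i j (mk i j R c c) = \<kappa>" using key_mk[OF nR] M by (simp add: R_def c_def key_def)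
  ultimately show "\<kappa> \<in> key i j ` cmpr i j B" by (metis imageI)
qed

lemma card_seg: "t \<le> Suc c \<Longrightarrow> card {a::nat. a \<le> c \<and> c < a + t} = t"
proof -
  assume t: "t \<le> Suc c"
  have "{a::nat. a \<le> c \<and> c < a + t} = {Suc c - t..c}" using t by auto
  then show ?thesis using t by simp
qed

lemma card_fib_le: "card (fib i j X R c) \<le> Suc c"
  using card_mono[OF _ fib_sub] by fastforce

lemma cmpr_finite:
  assumes "finite B" shows "finite (cmpr i j B)"
proof -
  have "cmpr i j B \<subseteq> (\<Union>\<kappa>\<in>key i j ` B. mk i j (fst \<kappa>) (snd \<kappa>) ` {0..snd \<kappa>})"
  proof
    fix N assume "N \<in> cmpr i j B"
    then obtain M where M: "M \<in> B" "key i j N = key i j M" by (auto simp: cmpr_def)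
    have "N = mk i j (rest i j N) (tot i j N) (count N i)" by (rule mk_decomp)
    moreover have "count N i \<le> tot i j N" by (rule count_le_tot)
    ultimately have "N \<in> mk i j (rest i j M) (tot i j M) ` {0..tot i j M}"
      using M by (auto simp: key_def)
    then show "N \<in> (\<Union>\<kappa>\<in>key i j ` B. mk i j (fst \<kappa>) (snd \<kappa>) ` {0..snd \<kappa>})"
      using M(1) by (auto simp: key_def)
  qed
  moreover have "finite (\<Union>\<kappa>\<in>key i j ` B. mk i j (fst \<kappa>) (snd \<kappa>) ` {0..snd \<kappa>})"
    using assms by auto
  ultimately show ?thesis by (rule finite_subset)
qed

lemma card_cmpr:
  assumes "finite B" shows "card (cmpr i j B) = card B"
proof -
  have "card (cmpr i j B) = (\<Sum>\<kappa>\<in>key i j ` B. card (fib i j (cmpr i j B) (fst \<kappa>) (snd \<kappa>)))"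
    using card_fibers[OF cmpr_finite[OF assms]] key_cmpr by simp
  also have "\<dots> = (\<Sum>\<kappa>\<in>key i j ` B. card (fib i j B (fst \<kappa>) (snd \<kappa>)))"
  proof (rule sum.cong[OF refl])
    fix \<kappa> assume k: "\<kappa> \<in> key i j ` B"
    then show "card (fib i j (cmpr i j B) (fst \<kappa>) (snd \<kappa>)) = card (fib i j B (fst \<kappa>) (snd \<kappa>))"
      using fib_cmpr[of "fst \<kappa>" "snd \<kappa>" B] card_seg card_fib_le by simp
  qed
  also have "\<dots> = card B" using card_fibers[OF assms] by simp
  finally show ?thesis .
qed

lemma size_rest: "size M = size (rest i j M) + tot i j M"
  by (subst mk_decomp[of M]) (simp add: mk_def tot_def)

lemma cmpr_univ:
  assumes "B \<subseteq> multisets_of_size {0..<n} k" "i < n" "j < n"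
  shows "cmpr i j B \<subseteq> multisets_of_size {0..<n} k"
proof
  fix N assume "N \<in> cmpr i j B"
  then obtain M where M: "M \<in> B" "key i j N = key i j M" by (auto simp: cmpr_def)
  have "size N = size M" using size_rest[of N] size_rest[of M] M(2) by (simp add: key_def)
  moreover have "set_mset N \<subseteq> set_mset M \<union> {i, j}"
  proof -
    have "set_mset N \<subseteq> set_mset (rest i j N) \<union> {i, j}"
      using set_mk[of "rest i j N" "tot i j N" "count N i"] mk_decomp[of N] by simp
    also have "\<dots> \<subseteq> set_mset M \<union> {i, j}" using M(2) set_rest[of M] by (auto simp: key_def)
    finally show ?thesis .
  qed
  moreover have "M \<in> multisets_of_size {0..<n} k" using M(1) assms(1) by blast
  ultimately show "N \<in> multisets_of_size {0..<n} k" using assms(2,3)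
    by (auto simp: multisets_of_size_def)
qed

lemma in_shadow: "M \<in> B \<Longrightarrow> x \<in># M \<Longrightarrow> M - {#x#} \<in> shadow B"
  unfolding shadow_def by blast

lemma fib_mono_shadow_E:
  assumes nR: "noij i j R"
  shows "{a \<in> fib i j B R (Suc c). a \<le> c} \<union> (\<lambda>a. a - 1) ` {a \<in> fib i j B R (Suc c). 1 \<le> a}
         \<subseteq> fib i j (shadow B) R c"
proof
  fix b assume "b \<in> {a \<in> fib i j B R (Suc c). a \<le> c} \<union> (\<lambda>a. a - 1) ` {a \<in> fib i j B R (Suc c). 1 \<le> a}"
  then consider "b \<in> fib i j B R (Suc c)" "b \<le> c"
    | a where "a \<in> fib i j B R (Suc c)" "1 \<le> a" "b = a - 1" by blast
  then show "b \<in> fib i j (shadow B) R c"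
  proof cases
    case 1
    then have inB: "mk i j R (Suc c) b \<in> B" by (simp add: fib_def)
    have "j \<in># mk i j R (Suc c) b" using 1 by (simp add: mk_def)
    then have "mk i j R (Suc c) b - {#j#} \<in> shadow B" using in_shadow[OF inB] by blast
    moreover have "mk i j R (Suc c) b - {#j#} = mk i j R c b" using mk_minus_j[of b "Suc c" R] 1 by simp
    ultimately show ?thesis using 1 by (simp add: fib_def)
  next
    case 2
    then have inB: "mk i j R (Suc c) a \<in> B" and ac: "a \<le> Suc c" by (auto simp: fib_def)
    have "i \<in># mk i j R (Suc c) a" using 2 by (simp add: mk_def)
    then have "mk i j R (Suc c) a - {#i#} \<in> shadow B" using in_shadow[OF inB] by blast
    moreover have "mk i j R (Suc c) a - {#i#} = mk i j R c (a - 1)"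
      using mk_minus_i[of a "Suc c" R] 2 ac by simp
    ultimately show ?thesis using 2 ac by (simp add: fib_def)
  qed
qed

lemma one_dim:
  fixes A :: "nat set"
  assumes "A \<subseteq> {0..Suc c}"
  shows "min (card A) (Suc c) \<le> card ({a \<in> A. a \<le> c} \<union> (\<lambda>a. a - 1) ` {a \<in> A. 1 \<le> a})"
proof -
  let ?E = "{a \<in> A. a \<le> c} \<union> (\<lambda>a. a - 1) ` {a \<in> A. 1 \<le> a}"
  have finA: "finite A" using finite_subset[OF assms] by blast
  have finE: "finite ?E" using finA by auto
  show ?thesis
  proof (cases "{0..Suc c} \<subseteq> A")
    case True
    then have "{0..c} \<subseteq> ?E" by auto
    then have "card {0..c} \<le> card ?E" by (rule card_mono[OF finE])
    then show ?thesis by simp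
  next
    case False
    then obtain g where g0: "g \<in> {0..Suc c}" "g \<notin> A" by blast
    then have g: "g \<le> Suc c" "g \<notin> A" by auto
    define \<phi> where "\<phi> a = (if a < g then a else a - 1)" for a :: nat
    have inj: "inj_on \<phi> A"
      unfolding inj_on_def
    proof (intro ballI impI)
      fix a a' assume a: "a \<in> A" "a' \<in> A" "\<phi> a = \<phi> a'"
      have "a \<noteq> g" "a' \<noteq> g" using a g(2) by auto
      then show "a = a'" using a(3) unfolding \<phi>_def by (auto split: if_splits)
    qed
    have "\<phi> ` A \<subseteq> ?E"
    proof
      fix b assume "b \<in> \<phi> ` A"
      then obtain a where a: "a \<in> A" "b = \<phi> a" by auto
      show "b \<in> ?E"
      proof (cases "a < g")
        case True then have "a \<le> c" using g(1) by simp
        then show ?thesis using a True by (simp add: \<phi>_def)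
      next
        case False then have "g < a" using a g(2) by (cases "a = g") auto
        then have "b = a - 1" "1 \<le> a" using a False by (auto simp: \<phi>_def)
        then show ?thesis using a(1) by blast
      qed
    qed
    then have "card (\<phi> ` A) \<le> card ?E" by (rule card_mono[OF finE])
    then show ?thesis using card_image[OF inj] by simp
  qed
qed

lemma shadow_finite: "finite B \<Longrightarrow> finite (shadow B)"
proof -
  assume fin: "finite B"
  have "shadow B \<subseteq> (\<Union>M\<in>B. (\<lambda>x. M - {#x#}) ` set_mset M)" unfolding shadow_def by blast
  moreover have "finite (\<Union>M\<in>B. (\<lambda>x. M - {#x#}) ` set_mset M)" using fin by auto
  ultimately show ?thesis by (rule finite_subset)
qed

lemma fiber_shadow_le:
  assumes fin: "finite B" and N0: "N0 \<in> shadow (cmpr i j B)"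
  defines "R' \<equiv> rest i j N0" and "c' \<equiv> tot i j N0"
  shows "card (fib i j (shadow (cmpr i j B)) R' c') \<le> card (fib i j (shadow B) R' c')"
proof -
  let ?F' = "fib i j (shadow (cmpr i j B)) R' c'"
  let ?F = "fib i j (shadow B) R' c'"
  have nR': "noij i j R'" by (simp add: R'_def rest_noij)
  have "count N0 i \<in> ?F'" using fib_nonempty[OF N0] by (simp add: R'_def c'_def)
  then have F'ne: "?F' \<noteq> {}" by blast
  define as where "as = Min ?F'"
  have as_in: "as \<in> ?F'" using F'ne by (simp add: as_def)
  have "?F' \<subseteq> {as..c'}" using Min_le[OF fib_finite] by (auto simp: as_def fib_def)
  then have cF': "card ?F' \<le> Suc c' - as" using card_mono[of "{as..c'}" ?F'] by simp
  have asc: "as \<le> c'" and "mk i j R' c' as \<in> shadow (cmpr i j B)" using as_in by (auto simp: fib_def)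
  then have "\<exists>N z. mk i j R' c' as = N - {#z#} \<and> N \<in> cmpr i j B \<and> z \<in># N"
    unfolding shadow_def by (simp only: mem_Collect_eq)
  then obtain N z where Nz0: "N \<in> cmpr i j B" "z \<in># N" "mk i j R' c' as = N - {#z#}"
    by blast
  then have Nz: "N \<in> cmpr i j B" "z \<in># N" "N - {#z#} = mk i j R' c' as" by auto
  define R c a where "R = rest i j N" and "c = tot i j N" and "a = count N i"
  have nR: "noij i j R" by (simp add: R_def rest_noij)
  have NN: "N = mk i j R c a" using mk_decomp[of N] by (simp add: R_def c_def a_def)
  have ac: "a \<le> c" using count_le_tot[of N] by (simp add: a_def c_def)
  define t where "t = card (fib i j B R c)"
  obtain M where M: "M \<in> B" "key i j N = key i j M" and ct: "c < a + t"
    using Nz(1) by (auto simp: cmpr_def R_def c_def a_def t_def)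
  have key_in: "(R, c) \<in> key i j ` B" using M by (auto simp: key_def R_def c_def)
  have goal: "Suc c' - as \<le> card ?F"
  proof (cases "z = i")
    case True
    then have a1: "1 \<le> a" using Nz(2) by (simp add: a_def)
    have e: "mk i j R (c - 1) (a - 1) = mk i j R' c' as"
      using True NN mk_minus_i[OF a1 ac] Nz(3) by simp
    have "R = R' \<and> c - 1 = c' \<and> a - 1 = as"
      by (rule mk_inj[OF nR _ nR' asc e]) (use ac in simp)
    then have eqs: "R = R'" "c = Suc c'" "a = Suc as" using a1 ac by auto
    have "min (card (fib i j B R (Suc c'))) (Suc c') \<le>
       card ({a \<in> fib i j B R (Suc c'). a \<le> c'} \<union> (\<lambda>a. a - 1) ` {a \<in> fib i j B R (Suc c'). 1 \<le> a})"
      by (rule one_dim[OF fib_sub])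
    also have "\<dots> \<le> card ?F"
      by (rule card_mono[OF fib_finite]) (use fib_mono_shadow_E[OF nR, of B c'] eqs in simp)
    finally show ?thesis using ct eqs by (simp add: t_def)
  next
    case zi: False
    show ?thesis
    proof (cases "z = j")
      case True
      then have "count N j \<ge> 1" using Nz(2) by simp
      then have a1: "a < c" using NN ac nR ij by (simp add: mk_def noij_def not_in_iff)
      have e: "mk i j R (c - 1) a = mk i j R' c' as"
        using True NN mk_minus_j[OF a1] Nz(3) by simp
      have "R = R' \<and> c - 1 = c' \<and> a = as"
        by (rule mk_inj[OF nR _ nR' asc e]) (use a1 in simp)
      then have eqs: "R = R'" "c = Suc c'" "a = as" using a1 by auto
      have "min (card (fib i j B R (Suc c'))) (Suc c') \<le>
         card ({a \<in> fib i j B R (Suc c'). a \<le> c'} \<union> (\<lambda>a. a - 1) ` {a \<in> fib i j B R (Suc c'). 1 \<le> a})"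
        by (rule one_dim[OF fib_sub])
      also have "\<dots> \<le> card ?F"
        by (rule card_mono[OF fib_finite]) (use fib_mono_shadow_E[OF nR, of B c'] eqs in simp)
      finally show ?thesis using ct eqs by (simp add: t_def)
    next
      case zj: False
      have zR: "z \<in># R" using Nz(2) zi zj NN by (simp add: mk_def split: if_splits)
      have nRz: "noij i j (R - {#z#})" using nR by (auto simp: noij_def dest: in_diffD)
      have e: "mk i j (R - {#z#}) c a = mk i j R' c' as" using NN mk_minus_z[OF zR] Nz(3) by simp
      have "R - {#z#} = R' \<and> c = c' \<and> a = as"
        by (rule mk_inj[OF nRz ac nR' asc e])
      then have eqs: "R - {#z#} = R'" "c = c'" "a = as" by auto
      have "fib i j B R c \<subseteq> ?F"
      proof
        fix b assume b: "b \<in> fib i j B R c"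
        then have inB: "mk i j R c b \<in> B" and bc: "b \<le> c" by (auto simp: fib_def)
        have "z \<in># mk i j R c b" using zR by (simp add: mk_def)
        then have "mk i j R c b - {#z#} \<in> shadow B" using in_shadow[OF inB] by blast
        then show "b \<in> ?F" using mk_minus_z[OF zR] eqs bc by (simp add: fib_def)
      qed
      then have "t \<le> card ?F" by (simp add: t_def card_mono[OF fib_finite])
      then show ?thesis using ct eqs by simp
    qed
  qed
  show ?thesis using cF' goal by simp
qed

lemma shadow_cmpr:
  assumes fin: "finite B"
  shows "card (shadow (cmpr i j B)) \<le> card (shadow B)"
proof -
  let ?S' = "shadow (cmpr i j B)" and ?S = "shadow B"
  have finS': "finite ?S'" by (rule shadow_finite[OF cmpr_finite[OF fin]])
  have finS: "finite ?S" by (rule shadow_finite[OF fin])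
  have le: "card (fib i j ?S' (fst \<kappa>) (snd \<kappa>)) \<le> card (fib i j ?S (fst \<kappa>) (snd \<kappa>))"
    if "\<kappa> \<in> key i j ` ?S'" for \<kappa>
    using that fiber_shadow_le[OF fin] by (auto simp: key_def)
  have sub: "key i j ` ?S' \<subseteq> key i j ` ?S"
  proof
    fix \<kappa> assume k: "\<kappa> \<in> key i j ` ?S'"
    then obtain N0 where N0: "N0 \<in> ?S'" "\<kappa> = key i j N0" by blast
    have nR: "noij i j (fst \<kappa>)" using N0 rest_noij by (simp add: key_def)
    have "count N0 i \<in> fib i j ?S' (fst \<kappa>) (snd \<kappa>)" using fib_nonempty[OF N0(1)] N0(2)
      by (simp add: key_def)
    then have "card (fib i j ?S' (fst \<kappa>) (snd \<kappa>)) > 0" using fib_finite card_gt_0_iff by blast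
    then have "card (fib i j ?S (fst \<kappa>) (snd \<kappa>)) > 0" using le[OF k] by simp
    then obtain a where "a \<in> fib i j ?S (fst \<kappa>) (snd \<kappa>)" by (metis card_gt_0_iff ex_in_conv)
    then have "mk i j (fst \<kappa>) (snd \<kappa>) a \<in> ?S" "a \<le> snd \<kappa>" by (auto simp: fib_def)
    moreover have "key i j (mk i j (fst \<kappa>) (snd \<kappa>) a) = \<kappa>" using key_mk[OF nR \<open>a \<le> snd \<kappa>\<close>] by simp
    ultimately show "\<kappa> \<in> key i j ` ?S" by (metis imageI)
  qed
  have "card ?S' = (\<Sum>\<kappa>\<in>key i j ` ?S'. card (fib i j ?S' (fst \<kappa>) (snd \<kappa>)))"
    by (rule card_fibers[OF finS'])
  also have "\<dots> \<le> (\<Sum>\<kappa>\<in>key i j ` ?S'. card (fib i j ?S (fst \<kappa>) (snd \<kappa>)))"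
    by (rule sum_mono) (rule le)
  also have "\<dots> \<le> (\<Sum>\<kappa>\<in>key i j ` ?S. card (fib i j ?S (fst \<kappa>) (snd \<kappa>)))"
    by (rule sum_mono2) (use finS sub in auto)
  also have "\<dots> = card ?S" by (rule card_fibers[OF finS, symmetric])
  finally show ?thesis .
qed

lemma weight_cmpr:
  assumes fin: "finite B" and lt: "i < j"
  shows "(\<Sum>M\<in>cmpr i j B. sum_mset M) \<le> (\<Sum>M\<in>B. sum_mset M)"
    and "M0 \<in> B \<Longrightarrow> j \<in># M0 \<Longrightarrow> add_mset i (M0 - {#j#}) \<notin> B \<Longrightarrow>
         (\<Sum>M\<in>cmpr i j B. sum_mset M) < (\<Sum>M\<in>B. sum_mset M)"
proof -
  define G where "G \<kappa> a = sum_mset (mk i j (fst \<kappa>) (snd \<kappa>) a)" for \<kappa> a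
  have dec: "G \<kappa> b < G \<kappa> a" if "a < b" "b \<le> snd \<kappa>" for \<kappa> a b
  proof -
    define d where "d = b - a"
    have d: "b = a + d" "0 < d" using that(1) by (auto simp: d_def)
    have e1: "snd \<kappa> - a = (snd \<kappa> - b) + d" using that d by simp
    have "d * i < d * j" using d(2) lt by simp
    then have "b * i + (snd \<kappa> - b) * j < a * i + (snd \<kappa> - a) * j"
      unfolding e1 d(1) by (simp add: algebra_simps)
    then show ?thesis using that by (simp add: G_def sum_mk)
  qed
  have fibeq: "fib i j (cmpr i j B) (fst \<kappa>) (snd \<kappa>) = {a. a \<le> snd \<kappa> \<and> snd \<kappa> < a + card (fib i j B (fst \<kappa>) (snd \<kappa>))}"
    if "\<kappa> \<in> key i j ` B" for \<kappa>
    using fib_cmpr[of "fst \<kappa>" "snd \<kappa>" B] that by simp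
  have S1: "(\<Sum>M\<in>cmpr i j B. sum_mset M) = (\<Sum>\<kappa>\<in>key i j ` B. \<Sum>a\<in>fib i j (cmpr i j B) (fst \<kappa>) (snd \<kappa>). G \<kappa> a)"
    using sum_fibers[OF cmpr_finite[OF fin], of sum_mset] key_cmpr by (simp add: G_def)
  have S2: "(\<Sum>M\<in>B. sum_mset M) = (\<Sum>\<kappa>\<in>key i j ` B. \<Sum>a\<in>fib i j B (fst \<kappa>) (snd \<kappa>). G \<kappa> a)"
    using sum_fibers[OF fin, of sum_mset] by (simp add: G_def)
  have each: "(\<Sum>a\<in>fib i j (cmpr i j B) (fst \<kappa>) (snd \<kappa>). G \<kappa> a) \<le> (\<Sum>a\<in>fib i j B (fst \<kappa>) (snd \<kappa>). G \<kappa> a)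
     \<and> (fib i j B (fst \<kappa>) (snd \<kappa>) \<noteq> fib i j (cmpr i j B) (fst \<kappa>) (snd \<kappa>) \<longrightarrow>
        (\<Sum>a\<in>fib i j (cmpr i j B) (fst \<kappa>) (snd \<kappa>). G \<kappa> a) < (\<Sum>a\<in>fib i j B (fst \<kappa>) (snd \<kappa>). G \<kappa> a))"
    if k: "\<kappa> \<in> key i j ` B" for \<kappa>
    using seg_sum[of "fib i j B (fst \<kappa>) (snd \<kappa>)" "snd \<kappa>" "G \<kappa>"] fib_sub dec fibeq[OF k] by auto
  show "(\<Sum>M\<in>cmpr i j B. sum_mset M) \<le> (\<Sum>M\<in>B. sum_mset M)"
    unfolding S1 S2 by (rule sum_mono) (use each in blast)
  assume M0: "M0 \<in> B" and jM0: "j \<in># M0" and nB: "add_mset i (M0 - {#j#}) \<notin> B"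
  define \<kappa>0 where "\<kappa>0 = key i j M0"
  have k0: "\<kappa>0 \<in> key i j ` B" using M0 by (simp add: \<kappa>0_def)
  define a0 where "a0 = count M0 i"
  have M0eq: "M0 = mk i j (fst \<kappa>0) (snd \<kappa>0) a0"
    using mk_decomp[of M0] by (simp add: \<kappa>0_def key_def a0_def)
  have nR0: "noij i j (fst \<kappa>0)" by (simp add: \<kappa>0_def key_def rest_noij)
  have a0c: "a0 < snd \<kappa>0" using jM0 ij by (simp add: \<kappa>0_def key_def a0_def tot_def)
  have a0in: "a0 \<in> fib i j B (fst \<kappa>0) (snd \<kappa>0)" using M0 M0eq a0c by (auto simp: fib_def)
  have "mk i j (fst \<kappa>0) (snd \<kappa>0) (Suc a0) = add_mset i (M0 - {#j#})"
    using mk_shift[OF a0c] M0eq by simp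
  then have a1n: "Suc a0 \<notin> fib i j B (fst \<kappa>0) (snd \<kappa>0)" using nB by (simp add: fib_def)
  have "fib i j B (fst \<kappa>0) (snd \<kappa>0) \<noteq> fib i j (cmpr i j B) (fst \<kappa>0) (snd \<kappa>0)"
  proof
    assume eq: "fib i j B (fst \<kappa>0) (snd \<kappa>0) = fib i j (cmpr i j B) (fst \<kappa>0) (snd \<kappa>0)"
    then have "a0 \<in> fib i j (cmpr i j B) (fst \<kappa>0) (snd \<kappa>0)" using a0in by simp
    then have "Suc a0 \<in> fib i j (cmpr i j B) (fst \<kappa>0) (snd \<kappa>0)" using fibeq[OF k0] a0c by auto
    then show False using eq a1n by simp
  qed
  then have strict: "(\<Sum>a\<in>fib i j (cmpr i j B) (fst \<kappa>0) (snd \<kappa>0). G \<kappa>0 a) < (\<Sum>a\<in>fib i j B (fst \<kappa>0) (snd \<kappa>0). G \<kappa>0 a)"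
    using each[OF k0] by blast
  show "(\<Sum>M\<in>cmpr i j B. sum_mset M) < (\<Sum>M\<in>B. sum_mset M)"
    unfolding S1 S2
    by (rule sum_strict_mono_ex1) (use fin each k0 strict in auto)
qed

end

lemma in_shadow0: "M \<in> B \<Longrightarrow> x \<in># M \<Longrightarrow> M - {#x#} \<in> shadow B"
  unfolding shadow_def by blast

lemma shadow_finite0: "finite B \<Longrightarrow> finite (shadow B)"
proof -
  assume fin: "finite B"
  have "shadow B \<subseteq> (\<Union>M\<in>B. (\<lambda>x. M - {#x#}) ` set_mset M)" unfolding shadow_def by blast
  moreover have "finite (\<Union>M\<in>B. (\<lambda>x. M - {#x#}) ` set_mset M)" using fin by auto
  ultimately show ?thesis by (rule finite_subset)
qed

lemma shadow_borel: "borel p B \<Longrightarrow> borel p (shadow B)"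
  unfolding borel_def
proof (intro conjI ballI allI impI)
  fix N x assume bo: "(\<forall>M\<in>B. \<forall>x\<in>#M. p \<le> x) \<and> (\<forall>M\<in>B. \<forall>x\<in>#M. \<forall>y. p \<le> y \<longrightarrow> y < x \<longrightarrow> add_mset y (M - {#x#}) \<in> B)"
    and N: "N \<in> shadow B" and x: "x \<in># N"
  from N obtain M z where M: "M \<in> B" "z \<in># M" "N = M - {#z#}" unfolding shadow_def by blast
  then show "p \<le> x" using bo x by (auto dest: in_diffD)
next
  fix N x y assume bo: "(\<forall>M\<in>B. \<forall>x\<in>#M. p \<le> x) \<and> (\<forall>M\<in>B. \<forall>x\<in>#M. \<forall>y. p \<le> y \<longrightarrow> y < x \<longrightarrow> add_mset y (M - {#x#}) \<in> B)"
    and N: "N \<in> shadow B" and x: "x \<in># N" and y: "p \<le> y" "y < x"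
  from N obtain M z where M: "M \<in> B" "z \<in># M" "N = M - {#z#}" unfolding shadow_def by blast
  have xM: "x \<in># M" using x M(3) by (auto dest: in_diffD)
  have inB: "add_mset y (M - {#x#}) \<in> B" using bo M(1) xM y by blast
  have zMx: "z \<in># M - {#x#}" using x M by (cases "z = x") (auto simp: in_diff_count)
  have "add_mset y (M - {#x#}) - {#z#} = add_mset y (M - {#x#} - {#z#})"
    using diff_add_mset_in[OF zMx] by simp
  also have "M - {#x#} - {#z#} = N - {#x#}" using M(3) by (simp add: multiset_eq_iff)
  finally have "add_mset y (N - {#x#}) = add_mset y (M - {#x#}) - {#z#}" by simp
  moreover have "z \<in># add_mset y (M - {#x#})" using zMx by simp
  ultimately show "add_mset y (N - {#x#}) \<in> shadow B" using in_shadow0[OF inB] by simp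
qed

lemma exists_borel:
  assumes B: "B \<subseteq> multisets_of_size {0..<n} k"
  shows "\<exists>B'. B' \<subseteq> multisets_of_size {0..<n} k \<and> card B' = card B \<and>
           card (shadow B') \<le> card (shadow B) \<and> borel 0 B'"
proof -
  define P where "P B' \<longleftrightarrow> B' \<subseteq> multisets_of_size {0..<n} k \<and> card B' = card B \<and>
           card (shadow B') \<le> card (shadow B)" for B'
  have "P B" using B by (simp add: P_def)
  then obtain B' where PB': "P B'" and least: "\<And>B''. P B'' \<Longrightarrow> (\<Sum>M\<in>B'. sum_mset M) \<le> (\<Sum>M\<in>B''. sum_mset M)"
    using ex_has_least_nat[of P B "\<lambda>B'. \<Sum>M\<in>B'. sum_mset M"] by blast
  have finU: "finite (multisets_of_size {0..<n} k)" by auto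
  have fin: "finite B'" using PB' finite_subset[OF _ finU] by (auto simp: P_def)
  have "borel 0 B'"
    unfolding borel_def
  proof (intro conjI ballI allI impI)
    fix M x y assume M: "M \<in> B'" and x: "x \<in># M" and y: "0 \<le> y" "y < x"
    show "add_mset y (M - {#x#}) \<in> B'"
    proof (rule ccontr)
      assume nB: "add_mset y (M - {#x#}) \<notin> B'"
      have yx: "y \<noteq> x" using y by simp
      have "M \<in> multisets_of_size {0..<n} k" using M PB' by (auto simp: P_def)
      then have xn: "x < n" using x by (auto simp: multisets_of_size_def)
      have "P (cmpr y x B')"
        unfolding P_def
      proof (intro conjI)
        show "cmpr y x B' \<subseteq> multisets_of_size {0..<n} k"
          using cmpr_univ[OF yx] PB' xn y by (simp add: P_def)
        show "card (cmpr y x B') = card B" using card_cmpr[OF yx fin] PB' by (simp add: P_def)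
        show "card (shadow (cmpr y x B')) \<le> card (shadow B)"
          using shadow_cmpr[OF yx fin] PB' by (simp add: P_def)
      qed
      then have "(\<Sum>M\<in>B'. sum_mset M) \<le> (\<Sum>M\<in>cmpr y x B'. sum_mset M)" by (rule least)
      moreover have "(\<Sum>M\<in>cmpr y x B'. sum_mset M) < (\<Sum>M\<in>B'. sum_mset M)"
        using weight_cmpr(2)[OF yx fin y(2) M x nB] .
      ultimately show False by simp
    qed
  qed simp
  then show ?thesis using PB' by (auto simp: P_def)
qed

lemma macaulay:
  assumes k: "1 \<le> k" and B: "B \<subseteq> multisets_of_size {0..<n} (Suc k)"
  shows "card B \<le> mf k (card (shadow B))"
proof -
  obtain B' where B': "B' \<subseteq> multisets_of_size {0..<n} (Suc k)" "card B' = card B"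
    "card (shadow B') \<le> card (shadow B)" "borel 0 B'"
    using exists_borel[OF B] by blast
  have finU: "finite (multisets_of_size {0..<n} (Suc k))" by auto
  have fin: "finite B'" using B'(1) finite_subset[OF _ finU] by blast
  have finS: "finite (shadow B')" by (rule shadow_finite0[OF fin])
  have szS: "\<forall>N\<in>shadow B'. size N = k"
    using B'(1) by (auto simp: shadow_def multisets_of_size_def size_Diff_singleton)
  have sub: "B' \<subseteq> up k (shadow B')"
  proof
    fix M assume M: "M \<in> B'"
    then have "size M = Suc k" using B'(1) by (auto simp: multisets_of_size_def)
    moreover have "\<forall>x\<in>#M. M - {#x#} \<in> shadow B'" using M in_shadow0 by blast
    ultimately show "M \<in> up k (shadow B')" by (simp add: up_def)
  qed
  have "card B = card B'" using B'(2) by simp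
  also have "\<dots> \<le> card (up k (shadow B'))" by (rule card_mono[OF up_finite[OF k finS] sub])
  also have "\<dots> \<le> mf k (card (shadow B'))" by (rule core[OF k finS szS shadow_borel[OF B'(4)]])
  also have "\<dots> \<le> mf k (card (shadow B))" by (rule mf_mono[OF k B'(3)])
  finally show ?thesis .
qed


lemma mf_zero[simp]: "mf k 0 = 0"
proof (induction k)
  case 0 then show ?case by simp
next
  case (Suc k)
  have "mtop (Suc k) 0 = k" by (rule mtop_unique) auto
  then show ?case using Suc by (simp add: mf.simps(2))
qed

lemma rep_bound_aux:
  assumes r1: "1 \<le> r" and rm: "r \<le> m r"
  shows "(\<forall>t. r \<le> t \<and> t < r + d \<longrightarrow> m t < m (Suc t)) \<Longrightarrow> m (r + d) \<le> M \<Longrightarrow>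
    (\<Sum>t=r..r+d. m t choose t) < Suc M choose (r + d)"
proof (induction d arbitrary: M)
  case 0
  have "m r choose r \<le> M choose r" by (rule binomial_right_mono) (use 0 in simp)
  moreover have "M choose (r - 1) > 0" using 0 rm by simp
  moreover have "Suc M choose r = (M choose (r - 1)) + (M choose r)"
    using r1 by (metis Suc_diff_1 binomial_Suc_Suc less_le_trans zero_less_one)
  ultimately have "m r choose r < Suc M choose r" by linarith
  then show ?case by simp
next
  case (Suc d)
  have mj: "m (r + d) < m (Suc (r + d))" using Suc.prems by simp
  have "m (Suc (r + d)) \<le> M" using Suc.prems by simp
  then have M1: "m (r + d) \<le> M - 1" "1 \<le> M" using mj by auto
  have IH: "(\<Sum>t=r..r+d. m t choose t) < Suc (M - 1) choose (r + d)"
    by (rule Suc.IH) (use Suc.prems M1 in auto)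
  have "Suc (M - 1) = M" using M1 by simp
  then have IH': "(\<Sum>t=r..r+d. m t choose t) < M choose (r + d)" using IH by simp
  have "m (Suc (r + d)) choose Suc (r + d) \<le> M choose Suc (r + d)"
    by (rule binomial_right_mono) (use Suc.prems in simp)
  then have "(\<Sum>t=r..Suc (r + d). m t choose t) < (M choose (r + d)) + (M choose Suc (r + d))"
    using IH' by (simp add: sum.cl_ivl_Suc)
  then show ?case by simp
qed

lemma rep_bound:
  assumes "1 \<le> r" "r \<le> j" "r \<le> m r" "\<forall>t. r \<le> t \<and> t < j \<longrightarrow> m t < m (Suc t)" "m j \<le> M"
  shows "(\<Sum>t=r..j. m t choose t) < Suc M choose j"
  using rep_bound_aux[of r m "j - r" M] assms by simp

lemma rep_value:
  "macaulay_rep b j m r \<Longrightarrow> (\<Sum>t=r..j. (m t + 1) choose (t + 1)) = mf j b"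
proof (induction j arbitrary: b)
  case 0 then show ?case by (simp add: macaulay_rep_def)
next
  case (Suc j)
  note rep = Suc.prems[unfolded macaulay_rep_def]
  define M where "M = m (Suc j)"
  define rem where "rem = b - (M choose Suc j)"
  have Mge: "Suc j \<le> M"
  proof -
    have "r \<le> m r" using rep by simp
    have "m r \<le> m (Suc j) - (Suc j - r)"
    proof -
      have "\<forall>d. d \<le> Suc j - r \<longrightarrow> m r + d \<le> m (r + d)"
      proof (intro allI impI)
        fix d assume "d \<le> Suc j - r"
        then show "m r + d \<le> m (r + d)"
        proof (induction d)
          case 0 then show ?case by simp
        next
          case (Suc d)
          then have "m (r + d) < m (Suc (r + d))" using rep by auto
          then show ?case using Suc by simp
        qed
      qed
      then have "m r + (Suc j - r) \<le> m (r + (Suc j - r))" by blast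
      then show ?thesis using rep by simp
    qed
    moreover have "1 \<le> r" using rep by simp
    ultimately show ?thesis using \<open>r \<le> m r\<close> unfolding M_def by linarith
  qed
  have bsplit: "b = (M choose Suc j) + (if r \<le> j then (\<Sum>t=r..j. m t choose t) else 0)"
    using rep by (auto simp: M_def sum.cl_ivl_Suc)
  have remeq: "rem = (if r \<le> j then (\<Sum>t=r..j. m t choose t) else 0)"
    using bsplit by (simp add: rem_def)
  have remlt: "rem < M choose j"
  proof (cases "r \<le> j")
    case True
    have "(\<Sum>t=r..j. m t choose t) < Suc (M - 1) choose j"
      by (rule rep_bound) (use rep True in \<open>auto simp: M_def\<close>)
    then show ?thesis using remeq True Mge by simp
  next
    case False
    then show ?thesis using remeq Mge by simp
  qed
  have blo: "M choose Suc j \<le> b" using bsplit by simp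
  then have b2: "b = (M choose Suc j) + rem" by (simp add: rem_def)
  have bhi: "b < Suc M choose Suc j" using b2 remlt by simp
  have "mf (Suc j) b = (Suc M choose Suc (Suc j)) + mf j rem"
    unfolding rem_def by (rule mf_decomp[OF blo bhi])
  moreover have "(\<Sum>t=r..Suc j. (m t + 1) choose (t + 1)) =
      (Suc M choose Suc (Suc j)) + (if r \<le> j then (\<Sum>t=r..j. (m t + 1) choose (t + 1)) else 0)"
    using rep by (auto simp: M_def sum.cl_ivl_Suc)
  moreover have "(if r \<le> j then (\<Sum>t=r..j. (m t + 1) choose (t + 1)) else 0) = mf j rem"
  proof (cases "r \<le> j")
    case True
    have "macaulay_rep rem j m r" using rep True remeq by (auto simp: macaulay_rep_def)
    then show ?thesis using Suc.IH True by simp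
  next
    case False then show ?thesis using remeq by simp
  qed
  ultimately show ?case by simp
qed

lemma rep_exists:
  assumes "1 \<le> j" shows "1 \<le> b \<Longrightarrow> \<exists>m r. macaulay_rep b j m r"
  using assms
proof (induction j arbitrary: b rule: nat_induct_at_least)
  case base
  show ?case by (rule exI[of _ "\<lambda>_. b"], rule exI[of _ 1]) (use base in \<open>simp add: macaulay_rep_def\<close>)
next
  case (Suc j)
  define mm where "mm = mtop (Suc j) b"
  define rem where "rem = b - (mm choose Suc j)"
  have lo: "mm choose Suc j \<le> b" using mtop_lower[of "Suc j" b] by (simp add: mm_def)
  have hi: "b < Suc mm choose Suc j" using mtop_upper[of "Suc j" b] by (simp add: mm_def)
  have remlt: "rem < mm choose j" using decomp_rem[OF lo hi] by (simp add: rem_def)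
  have mmge: "Suc j \<le> mm"
  proof (rule ccontr)
    assume "\<not> Suc j \<le> mm"
    then have "Suc mm \<le> Suc j" by simp
    then have "Suc mm choose Suc j \<le> 1"
      by (metis One_nat_def binomial_n_n binomial_right_mono)
    with hi Suc.prems show False by simp
  qed
  show ?case
  proof (cases "rem = 0")
    case True
    show ?thesis
      by (rule exI[of _ "\<lambda>_. mm"], rule exI[of _ "Suc j"])
         (use True lo mmge in \<open>auto simp: macaulay_rep_def rem_def\<close>)
  next
    case False
    then obtain m' r' where rep': "macaulay_rep rem j m' r'" using Suc.IH[of rem] Suc.hyps by auto
    note R = rep'[unfolded macaulay_rep_def]
    have "m' j choose j \<le> (\<Sum>t=r'..j. m' t choose t)"
      by (rule member_le_sum) (use R in auto)
    then have "m' j choose j \<le> rem" using R by simp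
    then have m'lt: "m' j < mm"
    proof -
      assume a: "m' j choose j \<le> rem"
      show ?thesis
      proof (rule ccontr)
        assume "\<not> m' j < mm"
        then have "mm choose j \<le> m' j choose j" by (simp add: binomial_right_mono)
        with a remlt show False by simp
      qed
    qed
    define m where "m = m'(Suc j := mm)"
    have "macaulay_rep b (Suc j) m r'"
      unfolding macaulay_rep_def
    proof (intro conjI allI impI)
      show "1 \<le> r'" "r' \<le> Suc j" "r' \<le> m r'" using R by (auto simp: m_def)
    next
      fix t assume t: "r' \<le> t \<and> t < Suc j"
      show "m t < m (Suc t)"
      proof (cases "t = j")
        case True then show ?thesis using m'lt by (simp add: m_def)
      next
        case False then show ?thesis using R t by (auto simp: m_def)
      qed
    next
      have "(\<Sum>t=r'..Suc j. m t choose t) = (\<Sum>t=r'..j. m t choose t) + (mm choose Suc j)"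
        using R by (simp add: sum.cl_ivl_Suc m_def)
      also have "(\<Sum>t=r'..j. m t choose t) = (\<Sum>t=r'..j. m' t choose t)"
        by (rule sum.cong) (auto simp: m_def)
      also have "\<dots> = rem" using R by simp
      finally show "b = (\<Sum>t=r'..Suc j. m t choose t)" using lo by (simp add: rem_def)
    qed
    then show ?thesis by blast
  qed
qed

lemma macaulay_upper_eq: "1 \<le> b \<Longrightarrow> 1 \<le> j \<Longrightarrow> macaulay_upper b j = mf j b"
proof -
  assume b: "1 \<le> b" and j: "1 \<le> j"
  obtain m r where rep: "macaulay_rep b j m r" using rep_exists[OF j b] by blast
  have "(THE v. \<exists>m r. macaulay_rep b j m r \<and> v = (\<Sum>t=r..j. (m t + 1) choose (t + 1))) = mf j b"
  proof (rule the_equality)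
    show "\<exists>m r. macaulay_rep b j m r \<and> mf j b = (\<Sum>t=r..j. (m t + 1) choose (t + 1))"
      using rep rep_value[OF rep] by metis
  next
    fix v assume "\<exists>m r. macaulay_rep b j m r \<and> v = (\<Sum>t=r..j. (m t + 1) choose (t + 1))"
    then show "v = mf j b" using rep_value by blast
  qed
  then show ?thesis using b by (simp add: macaulay_upper_def)
qed

lemma macaulay_upper_mf: "1 \<le> j \<Longrightarrow> macaulay_upper b j = mf j b"
proof (cases "b = 0")
  case True then show ?thesis by (simp add: macaulay_upper_def)
next
  case False
  assume "1 \<le> j"
  then show ?thesis using macaulay_upper_eq[of b j] False by simp
qed

section \<open>Lists and multisets\<close>

definition ms :: "nat list \<Rightarrow> nat multiset" where
  "ms x = (\<Sum>t<length x. replicate_mset (x!t - 1) t)"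
definition lst :: "nat \<Rightarrow> nat multiset \<Rightarrow> nat list" where
  "lst d M = map (\<lambda>t. Suc (count M t)) [0..<d]"

lemma count_ms: "count (ms x) t = (if t < length x then x!t - 1 else 0)"
  unfolding ms_def by (simp add: count_sum sum.delta')

lemma set_ms: "set_mset (ms x) \<subseteq> {0..<length x}"
proof
  fix t assume "t \<in> set_mset (ms x)"
  then have "count (ms x) t > 0" by simp
  then show "t \<in> {0..<length x}" by (simp add: count_ms split: if_splits)
qed

lemma size_sum_mset': "size (\<Sum>a\<in>A. (f a :: 'b multiset)) = (\<Sum>a\<in>A. size (f a))"
  by (induction A rule: infinite_finite_induct) auto

lemma size_ms:
  assumes "\<forall>t<length x. 1 \<le> x!t"
  shows "size (ms x) + length x = sum_list x"
proof -
  have "size (ms x) = (\<Sum>t<length x. x!t - 1)" by (simp add: ms_def size_sum_mset')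
  moreover have "(\<Sum>t<length x. x!t - 1) + length x = (\<Sum>t<length x. x!t)"
  proof -
    have "(\<Sum>t<length x. x!t) = (\<Sum>t<length x. (x!t - 1) + 1)"
      by (rule sum.cong) (use assms in auto)
    also have "\<dots> = (\<Sum>t<length x. x!t - 1) + (\<Sum>t<length x. 1)" by (rule sum.distrib)
    also have "(\<Sum>t<length x. 1::nat) = length x" by simp
    finally show ?thesis by simp
  qed
  moreover have "sum_list x = (\<Sum>t<length x. x!t)"
    by (simp add: sum_list_sum_nth lessThan_atLeast0)
  ultimately show ?thesis by simp
qed

lemma lst_ms: "length x = d \<Longrightarrow> (\<forall>t<d. 1 \<le> x!t) \<Longrightarrow> lst d (ms x) = x"
  by (rule nth_equalityI) (auto simp: lst_def count_ms)

lemma ms_lst: "set_mset M \<subseteq> {0..<d} \<Longrightarrow> ms (lst d M) = M"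
proof -
  assume sub: "set_mset M \<subseteq> {0..<d}"
  show ?thesis
  proof (rule multiset_eqI)
    fix t
    show "count (ms (lst d M)) t = count M t"
    proof (cases "t < d")
      case True then show ?thesis by (simp add: count_ms lst_def)
    next
      case False
      then have "t \<notin># M" using sub by auto
      then show ?thesis using False by (simp add: count_ms lst_def not_in_iff)
    qed
  qed
qed

lemma ms_mono: "length x = d \<Longrightarrow> length y = d \<Longrightarrow> (\<forall>t<d. y!t \<le> x!t) \<Longrightarrow> ms y \<subseteq># ms x"
  unfolding subseteq_mset_def by (auto simp: count_ms diff_le_mono)

lemma ms_upd:
  assumes "z < length x" "2 \<le> x!z"
  shows "ms (x[z := x!z - 1]) = ms x - {#z#}"
  by (rule multiset_eqI) (use assms in \<open>auto simp: count_ms nth_list_update\<close>)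

lemma ms_rep1: "ms (replicate d 1) = {#}"
  by (rule multiset_eqI) (simp add: count_ms)

lemma dir_ab:
  assumes fh: "ferrers_hypergraph d n F" and ne: "F \<noteq> {}"
  shows "O_sequence (\<lambda>i. alpha d i F) \<and> alpha d 1 F \<le> d"
proof -
  have FV: "\<And>x. x \<in> F \<Longrightarrow> length x = d \<and> (\<forall>j<d. 1 \<le> x ! j \<and> x ! j \<le> n j)"
    using fh unfolding ferrers_hypergraph_def by blast
  have down: "\<And>x y. x \<in> F \<Longrightarrow> length y = d \<Longrightarrow> (\<forall>j<d. 1 \<le> y ! j \<and> y ! j \<le> x ! j) \<Longrightarrow> y \<in> F"
    using fh unfolding ferrers_hypergraph_def by blast
  have finF: "finite F"
  proof -
    have "F \<subseteq> {xs. set xs \<subseteq> {0..(\<Sum>j<d. n j)} \<and> length xs = d}"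
    proof
      fix x assume x: "x \<in> F"
      have "x ! j \<le> (\<Sum>j<d. n j)" if "j < d" for j
      proof -
        have "x ! j \<le> n j" using FV[OF x] that by blast
        also have "n j \<le> (\<Sum>j<d. n j)" by (rule member_le_sum) (use that in auto)
        finally show ?thesis .
      qed
      then show "x \<in> {xs. set xs \<subseteq> {0..(\<Sum>j<d. n j)} \<and> length xs = d}"
        using FV[OF x] by (auto simp: in_set_conv_nth)
    qed
    then show ?thesis by (rule finite_subset) (simp add: finite_lists_length_eq)
  qed
  have injF: "inj_on ms F"
  proof (rule inj_on_inverseI)
    fix x assume "x \<in> F" then show "lst d (ms x) = x" using FV lst_ms by blast
  qed
  define G where "G k = ms ` {x \<in> F. sum_list x = k + d}" for k
  have cardG: "card (G k) = alpha d k F" for k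
    unfolding G_def alpha_def by (rule card_image) (rule inj_on_subset[OF injF], auto)
  have finG: "finite (G k)" for k using finF by (simp add: G_def)
  have Gsub: "G k \<subseteq> multisets_of_size {0..<d} k" for k
  proof
    fix M assume "M \<in> G k"
    then obtain x where x: "x \<in> F" "sum_list x = k + d" "M = ms x" by (auto simp: G_def)
    have "size (ms x) + length x = sum_list x" by (rule size_ms) (use FV[OF x(1)] in auto)
    then have "size M = k" using x FV[OF x(1)] by simp
    moreover have "set_mset M \<subseteq> {0..<d}" using set_ms[of x] x FV[OF x(1)] by simp
    ultimately show "M \<in> multisets_of_size {0..<d} k" by (simp add: multisets_of_size_def)
  qed
  have shG: "shadow (G (Suc k)) \<subseteq> G k" for k
  proof
    fix N assume "N \<in> shadow (G (Suc k))"
    then obtain M z where Mz: "M \<in> G (Suc k)" "z \<in># M" "N = M - {#z#}" unfolding shadow_def by blast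
    then obtain x where x: "x \<in> F" "sum_list x = Suc k + d" "M = ms x" by (auto simp: G_def)
    have lx: "length x = d" and ex: "\<forall>j<d. 1 \<le> x ! j \<and> x ! j \<le> n j" using FV[OF x(1)] by auto
    have zd: "z < d" using set_ms[of x] Mz(2) x(3) lx by auto
    have "count (ms x) z > 0" using Mz(2) x(3) by simp
    then have xz: "2 \<le> x ! z" using zd lx by (simp add: count_ms)
    define y where "y = x[z := x ! z - 1]"
    have ly: "length y = d" using lx by (simp add: y_def)
    have ey: "\<forall>j<d. 1 \<le> y ! j \<and> y ! j \<le> x ! j" using ex xz lx zd by (auto simp: y_def nth_list_update)
    have yF: "y \<in> F" by (rule down[OF x(1) ly ey])
    have "ms y = N" using ms_upd[of z x] zd lx xz Mz(3) x(3) by (simp add: y_def)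
    moreover have "sum_list y = k + d"
    proof -
      have e: "sum_list y = sum_list x + (x!z - 1) - x!z"
        using sum_list_update[of z x "x ! z - 1"] zd lx by (simp add: y_def)
      have "x ! z \<in> set x" using zd lx by simp
      then have ge: "x!z \<le> sum_list x" by (rule member_le_sum_list) simp
      have "sum_list y + 1 = sum_list x" using e ge xz by arith
      then show ?thesis using x(2) by simp
    qed
    ultimately show "N \<in> G k" using yF by (auto simp: G_def)
  qed
  obtain x0 where x0: "x0 \<in> F" using ne by blast
  have r1F: "replicate d 1 \<in> F"
    by (rule down[OF x0]) (use FV[OF x0] in auto)
  have "sum_list (replicate d (1::nat)) = 0 + d" by (simp add: sum_list_replicate)
  then have "replicate d 1 \<in> {x \<in> F. sum_list x = 0 + d}" using r1F by simp
  then have "ms (replicate d 1) \<in> G 0" unfolding G_def by (rule imageI)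
  then have "{#} \<in> G 0" using ms_rep1[of d] by simp
  moreover have "G 0 \<subseteq> {{#}}" using Gsub[of 0] by simp
  ultimately have "G 0 = {{#}}" by blast
  then have a0: "alpha d 0 F = 1" using cardG[of 0] by simp
  have a1: "alpha d 1 F \<le> d"
  proof -
    have "card (G 1) \<le> card (multisets_of_size {0..<d} 1)"
      by (rule card_mono[OF _ Gsub]) auto
    then show ?thesis using cardG[of 1] by (simp add: card_multisets_of_size)
  qed
  have step: "alpha d (Suc i) F \<le> macaulay_upper (alpha d i F) i" if i: "1 \<le> i" for i
  proof -
    have "card (G (Suc i)) \<le> mf i (card (shadow (G (Suc i))))"
      by (rule macaulay[OF i Gsub])
    also have "\<dots> \<le> mf i (card (G i))"
      by (rule mf_mono[OF i card_mono[OF finG shG]])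
    finally show ?thesis using cardG macaulay_upper_mf[OF i] by simp
  qed
  show ?thesis using a0 a1 step by (simp add: O_sequence_def)
qed

lemma down_G:
  assumes up: "\<And>k. G (Suc k) \<subseteq> up k (G k)" and sz: "\<And>k M. M \<in> G k \<Longrightarrow> size M = k"
  shows "M \<in> G k \<Longrightarrow> N \<subseteq># M \<Longrightarrow> N \<in> G (size N)"
proof (induction k arbitrary: M)
  case 0
  then have "M = {#}" using sz by auto
  then show ?case using 0 by simp
next
  case (Suc k)
  show ?case
  proof (cases "N = M")
    case True then show ?thesis using Suc.prems sz by simp
  next
    case False
    have "M - N \<noteq> {#}"
    proof
      assume "M - N = {#}"
      then have "M \<subseteq># N" by (simp add: Diff_eq_empty_iff_mset)
      then show False using False Suc.prems(2) by (simp add: subset_mset.antisym)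
    qed
    then obtain z where z: "z \<in># M - N" by (meson multiset_nonemptyE)
    have zM: "z \<in># M" using z by (auto dest: in_diffD)
    have "M - {#z#} \<in> G k" using up[of k] Suc.prems(1) zM by (auto simp: up_def)
    moreover have "N \<subseteq># M - {#z#}"
      using Suc.prems(2) z unfolding subseteq_mset_def
    proof (intro allI)
      fix a
      have "count N a \<le> count M a" using Suc.prems(2) by (simp add: subseteq_mset_def)
      moreover have "a = z \<Longrightarrow> count N a < count M a" using z by (simp add: in_diff_count)
      ultimately show "count N a \<le> count (M - {#z#}) a" by (cases "a = z") auto
    qed
    ultimately show ?thesis by (rule Suc.IH)
  qed
qed

lemma dir_ba:
  assumes os: "O_sequence H" and h1: "H 1 \<le> d" and hs: "\<forall>i>s. H i = 0"
  shows "\<exists>n F. ferrers_hypergraph d n F \<and> F \<noteq> {} \<and> (\<forall>i. alpha d i F = H i)"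
proof -
  have H0: "H 0 = 1" using os by (simp add: O_sequence_def)
  define G where "G k = col 0 k (H k)" for k
  have G0: "G 0 = {{#}}" using H0 by (simp add: G_def)
  have sz: "\<And>k M. M \<in> G k \<Longrightarrow> size M = k" unfolding G_def by (rule col_size)
  have cardG: "card (G k) = H k" for k
  proof (cases k)
    case 0 then show ?thesis using G0 H0 by simp
  next
    case (Suc k') then show ?thesis using col_card'[of k 0 "H k"] by (simp add: G_def)
  qed
  have Gup: "G (Suc k) \<subseteq> up k (G k)" for k
  proof (cases k)
    case 0
    show ?thesis
    proof
      fix M assume "M \<in> G (Suc k)"
      then have "size M = 1" using sz 0 by fastforce
      then obtain a where "M = {#a#}" by (metis size_1_singleton_mset)
      then show "M \<in> up k (G k)" using 0 G0 by (simp add: up_def)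
    qed
  next
    case (Suc k')
    then have k1: "1 \<le> k" by simp
    have "H (Suc k) \<le> macaulay_upper (H k) k" using os k1 by (simp add: O_sequence_def)
    then have "H (Suc k) \<le> mf k (H k)" using macaulay_upper_mf[OF k1] by simp
    then have "G (Suc k) \<subseteq> col 0 (Suc k) (mf k (H k))" unfolding G_def by (rule col_mono)
    also have "\<dots> = up k (G k)" using col_up[of k "H k" 0] k1 by (simp add: G_def)
    finally show ?thesis .
  qed
  have downG: "\<And>k M N. M \<in> G k \<Longrightarrow> N \<subseteq># M \<Longrightarrow> N \<in> G (size N)"
    using down_G[of G, OF Gup sz] by blast
  have vars: "z < d" if "M \<in> G k" "z \<in># M" for k M z
  proof -
    have "{#z#} \<subseteq># M" using that(2) by simp
    then have "{#z#} \<in> G 1" using downG[OF that(1)] by fastforce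
    moreover have "G 1 \<subseteq> multisets_of_size {0..<0 + Suc (H 1) - 1} 1"
      unfolding G_def by (rule col_range) simp
    ultimately have "z < H 1" by (auto simp: multisets_of_size_def)
    then show ?thesis using h1 by simp
  qed
  have ks: "k \<le> s" if "M \<in> G k" for k M
  proof (rule ccontr)
    assume "\<not> k \<le> s"
    then have "H k = 0" using hs by simp
    then show False using that by (simp add: G_def)
  qed
  define F where "F = {x. length x = d \<and> (\<forall>j<d. 1 \<le> x ! j \<and> x ! j \<le> Suc s) \<and> ms x \<in> G (size (ms x))}"
  have fh: "ferrers_hypergraph d (\<lambda>_. Suc s) F"
    unfolding ferrers_hypergraph_def
  proof (intro conjI ballI allI impI)
    show "F \<subseteq> {x. length x = d \<and> (\<forall>j<d. 1 \<le> x ! j \<and> x ! j \<le> Suc s)}" by (auto simp: F_def)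
  next
    fix x y assume x: "x \<in> F" and y: "length y = d \<and> (\<forall>j<d. 1 \<le> y ! j \<and> y ! j \<le> x ! j)"
    have "ms y \<subseteq># ms x" using x y by (intro ms_mono[of x d y]) (auto simp: F_def)
    then have "ms y \<in> G (size (ms y))" using downG x by (auto simp: F_def)
    moreover have "\<forall>j<d. 1 \<le> y ! j \<and> y ! j \<le> Suc s" using x y by (force simp: F_def)
    ultimately show "y \<in> F" using y by (simp add: F_def)
  qed
  have "replicate d 1 \<in> F" using G0 ms_rep1[of d] by (simp add: F_def)
  then have ne: "F \<noteq> {}" by blast
  have alpha: "alpha d i F = H i" for i
  proof -
    have bij: "bij_betw ms {x \<in> F. sum_list x = i + d} (G i)"
      unfolding bij_betw_def
    proof (intro conjI)
      show "inj_on ms {x \<in> F. sum_list x = i + d}"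
      proof (rule inj_on_inverseI)
        fix x assume "x \<in> {x \<in> F. sum_list x = i + d}"
        then show "lst d (ms x) = x" using lst_ms by (auto simp: F_def)
      qed
    next
      show "ms ` {x \<in> F. sum_list x = i + d} = G i"
      proof (intro set_eqI iffI)
        fix M assume "M \<in> ms ` {x \<in> F. sum_list x = i + d}"
        then obtain x where x: "x \<in> F" "sum_list x = i + d" "M = ms x" by auto
        have "size (ms x) + length x = sum_list x" by (rule size_ms) (use x in \<open>auto simp: F_def\<close>)
        then have "size M = i" using x by (simp add: F_def)
        then show "M \<in> G i" using x by (simp add: F_def)
      next
        fix M assume M: "M \<in> G i"
        define x where "x = lst d M"
        have setM: "set_mset M \<subseteq> {0..<d}" using vars[OF M] by auto
        have msx: "ms x = M" using ms_lst[OF setM] by (simp add: x_def)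
        have szM: "size M = i" using sz[OF M] .
        have lx: "length x = d" by (simp add: x_def lst_def)
        have ex: "\<forall>j<d. 1 \<le> x ! j \<and> x ! j \<le> Suc s"
        proof (intro allI impI)
          fix j assume j: "j < d"
          have "count M j \<le> size M" by (rule count_le_size)
          then have "count M j \<le> s" using szM ks[OF M] by simp
          then show "1 \<le> x ! j \<and> x ! j \<le> Suc s" using j by (simp add: x_def lst_def)
        qed
        have "size (ms x) + length x = sum_list x" by (rule size_ms) (use ex lx in auto)
        then have "sum_list x = i + d" using msx szM lx by simp
        moreover have "x \<in> F" using lx ex msx M szM by (simp add: F_def)
        ultimately show "M \<in> ms ` {x \<in> F. sum_list x = i + d}" using msx by force
      qed
    qed
    have "alpha d i F = card (G i)" unfolding alpha_def by (rule bij_betw_same_card[OF bij])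
    then show ?thesis using cardG by simp
  qed
  show ?thesis using fh ne alpha by blast
qed

theorem proposition3p4:
  fixes d s :: nat and h :: "nat \<Rightarrow> nat"
  assumes "d \<ge> 1"
  shows "(\<exists>n F. ferrers_hypergraph d n F \<and> F \<noteq> {} \<and>
            (\<forall>i\<le>s. alpha d i F = h i) \<and> (\<forall>i>s. alpha d i F = 0))
         \<longleftrightarrow> (O_sequence (trunc_seq h s) \<and> trunc_seq h s 1 \<le> d)"
proof
  assume "\<exists>n F. ferrers_hypergraph d n F \<and> F \<noteq> {} \<and>
            (\<forall>i\<le>s. alpha d i F = h i) \<and> (\<forall>i>s. alpha d i F = 0)"
  then obtain n F where F: "ferrers_hypergraph d n F" "F \<noteq> {}"
    "\<forall>i\<le>s. alpha d i F = h i" "\<forall>i>s. alpha d i F = 0" by blast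
  have eq: "trunc_seq h s = (\<lambda>i. alpha d i F)"
    using F(3,4) by (auto simp: trunc_seq_def fun_eq_iff)
  show "O_sequence (trunc_seq h s) \<and> trunc_seq h s 1 \<le> d"
    using dir_ab[OF F(1,2)] eq by simp
next
  assume a: "O_sequence (trunc_seq h s) \<and> trunc_seq h s 1 \<le> d"
  have hs: "\<forall>i>s. trunc_seq h s i = 0" by (simp add: trunc_seq_def)
  obtain n F where F: "ferrers_hypergraph d n F" "F \<noteq> {}" "\<forall>i. alpha d i F = trunc_seq h s i"
    using dir_ba[OF a[THEN conjunct1] a[THEN conjunct2] hs] by blast
  show "\<exists>n F. ferrers_hypergraph d n F \<and> F \<noteq> {} \<and>
            (\<forall>i\<le>s. alpha d i F = h i) \<and> (\<forall>i>s. alpha d i F = 0)"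
    using F by (intro exI[of _ n] exI[of _ F]) (auto simp: trunc_seq_def)
qed


end
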